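(* Let $(X,\mathcal{A},\mu,T)$ be an ergodic probability preserving system and $(R_l)_{l\ge1}$ a sequence of Borel measurable maps $R_l:X\to\mathfrak{E}$ into a compact metric space $(\mathfrak{E},d_{\mathfrak{E}})$ which is asymptotically $T$-invariant in measure. Let $\mathfrak{K}$ be a compact set in $(\mathfrak{P},d_{\mathfrak{P}})$. Then $$\sup_{\nu,\overline\nu\in\mathfrak{K}}D_{\mathfrak{E}}(\mathrm{law}_\nu(R_l),\mathrm{law}_{\overline\nu}(R_l))\to0\qquad\text{as }l\to\infty.$$ Hence for any random element $R$ of $\mathfrak{E}$ and any two sequences $(\nu_l),(\overline\nu_l)$ in $\mathfrak{K}$, $R_l\overset{\overline\nu_l}{\Longrightarrow}R$ implies $R_l\overset{\nu_l}{\Longrightarrow}R$ as $l\to\infty$.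
   Context: $\mathfrak{P}$: probability measures $\nu\ll\mu$ on $(X,\mathcal{A})$ with $d_{\mathfrak{P}}(\nu,\nu')=2\sup_A|\nu(A)-\nu'(A)|$. $\mathrm{law}_\nu(R):=\nu\circ R^{-1}$. $(R_l)$ is asymptotically $T$-invariant in measure if $d_{\mathfrak{E}}(R_l\circ T,R_l)\to0$ in $\mu$-measure. $D_{\mathfrak{E}}$ is the metric on Borel probabilities on $\mathfrak{E}$ given by $D_{\mathfrak{E}}(Q,Q'):=\sum_{j\ge1}2^{-(j+1)}|\int\chi_j\,dQ-\int\chi_j\,dQ'|$, where $\chi_j=\vartheta_j/\sup|\vartheta_j|$ for a fixed sequence $(\vartheta_j)$ of Lipschitz functions dense in $\mathcal{C}(\mathfrak{E})$; it metrizes weak convergence. $\overset{\nu}{\Longrightarrow}$: weak convergence of laws under $\nu$. *)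

theory Defs
  imports "HOL-Probability.Probability"
begin

definition ergodic_pps :: "'a measure \<Rightarrow> ('a \<Rightarrow> 'a) \<Rightarrow> bool" where
  "ergodic_pps \<mu> T \<longleftrightarrow>
     prob_space \<mu> \<and> T \<in> measurable \<mu> \<mu> \<and>
     (\<forall>A\<in>sets \<mu>. measure \<mu> (T -` A \<inter> space \<mu>) = measure \<mu> A) \<and>
     (\<forall>A\<in>sets \<mu>. T -` A \<inter> space \<mu> = A \<longrightarrow> measure \<mu> A = 0 \<or> measure \<mu> A = 1)"

definition probs_ac :: "'a measure \<Rightarrow> 'a measure set" where
  "probs_ac \<mu> = {\<nu>. prob_space \<nu> \<and> sets \<nu> = sets \<mu> \<and> absolutely_continuous \<mu> \<nu>}"

definition dP :: "'a measure \<Rightarrow> 'a measure \<Rightarrow> 'a measure \<Rightarrow> real" where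
  "dP \<mu> \<nu> \<nu>' = 2 * (SUP A\<in>sets \<mu>. \<bar>measure \<nu> A - measure \<nu>' A\<bar>)"

text \<open>Compactness of K in the metric space (P, d_P), expressed as sequential compactness
  (equivalent to compactness in metric spaces).\<close>
definition dP_compact :: "'a measure \<Rightarrow> 'a measure set \<Rightarrow> bool" where
  "dP_compact \<mu> K \<longleftrightarrow> K \<subseteq> probs_ac \<mu> \<and>
     (\<forall>s::nat \<Rightarrow> 'a measure. (\<forall>n. s n \<in> K) \<longrightarrow>
        (\<exists>r \<nu>. strict_mono r \<and> \<nu> \<in> K \<and> (\<lambda>n. dP \<mu> (s (r n)) \<nu>) \<longlonglongrightarrow> 0))"

definition asympt_inv_in_measure ::
    "'a measure \<Rightarrow> ('a \<Rightarrow> 'a) \<Rightarrow> (nat \<Rightarrow> 'a \<Rightarrow> 'e::metric_space) \<Rightarrow> bool" where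
  "asympt_inv_in_measure \<mu> T R \<longleftrightarrow>
     (\<forall>\<epsilon>>0. (\<lambda>l. measure \<mu> {x\<in>space \<mu>. dist (R l (T x)) (R l x) > \<epsilon>}) \<longlonglongrightarrow> 0)"

definition law :: "'a measure \<Rightarrow> ('a \<Rightarrow> 'e::topological_space) \<Rightarrow> 'e measure" where
  "law \<nu> R = distr \<nu> borel R"

text \<open>Admissible sequence (theta_j): Lipschitz functions, dense in C(E) for the sup norm.
  The paper's index j \<ge> 1 corresponds to index j - 1 here (sequence indexed from 0).\<close>
definition admissible_seq :: "(nat \<Rightarrow> 'e::metric_space \<Rightarrow> real) \<Rightarrow> bool" where
  "admissible_seq \<theta> \<longleftrightarrow>
     (\<forall>j. \<exists>L. L-lipschitz_on UNIV (\<theta> j)) \<and>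
     (\<forall>f::'e \<Rightarrow> real. continuous_on UNIV f \<longrightarrow>
        (\<forall>\<epsilon>>0. \<exists>j. \<forall>x. \<bar>f x - \<theta> j x\<bar> < \<epsilon>))"

definition chi :: "(nat \<Rightarrow> 'e \<Rightarrow> real) \<Rightarrow> nat \<Rightarrow> 'e \<Rightarrow> real" where
  "chi \<theta> j x = \<theta> j x / (SUP y. \<bar>\<theta> j y\<bar>)"

text \<open>D_E(Q,Q') = sum_{j\<ge>1} 2^{-(j+1)} |int chi_j dQ - int chi_j dQ'|, reindexed from 0.\<close>
definition DE :: "(nat \<Rightarrow> 'e \<Rightarrow> real) \<Rightarrow> 'e measure \<Rightarrow> 'e measure \<Rightarrow> real" where
  "DE \<theta> Q Q' = (\<Sum>j. (1/2) ^ (j + 2) *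
      \<bar>(\<integral>y. chi \<theta> j y \<partial>Q) - (\<integral>y. chi \<theta> j y \<partial>Q')\<bar>)"

definition weak_conv_law :: "(nat \<Rightarrow> 'e::topological_space measure) \<Rightarrow> 'e measure \<Rightarrow> bool" where
  "weak_conv_law Qs Q \<longleftrightarrow>
     (\<forall>f::'e \<Rightarrow> real. continuous_on UNIV f \<longrightarrow> bounded (range f) \<longrightarrow>
        (\<lambda>l. \<integral>y. f y \<partial>(Qs l)) \<longlonglongrightarrow> (\<integral>y. f y \<partial>Q))"

end

theory Submission
  imports Defs
begin

locale mps = prob_space M for M :: "'a measure" +
  fixes T :: "'a \<Rightarrow> 'a"
  assumes T_meas[measurable]: "T \<in> measurable M M"
    and T_pres: "distr M M T = M"
begin

lemma Tn_meas[measurable]: "(T ^^ n) \<in> measurable M M"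
  by (induct n) (auto simp: measurable_ident)

lemma Tn_pres: "distr M M (T ^^ n) = M"
proof (induct n)
  case 0 then show ?case by (simp add: distr_id2 sets_eq_imp_space_eq cong: distr_cong)
next
  case (Suc n)
  have "distr M M (T ^^ Suc n) = distr M M ((T ^^ n) \<circ> T)" by (simp add: funpow_Suc_right del: funpow.simps)
  also have "\<dots> = distr (distr M M T) M (T ^^ n)" by (rule distr_distr[symmetric]) auto
  also have "\<dots> = M" using Suc T_pres by simp
  finally show ?case .
qed

lemma int_Tn:
  fixes f :: "'a \<Rightarrow> real"
  assumes [measurable]: "f \<in> borel_measurable M"
  shows "(\<integral>x. f ((T ^^ n) x) \<partial>M) = integral\<^sup>L M f"
proof -
  have "integral\<^sup>L M f = integral\<^sup>L (distr M M (T ^^ n)) f" using Tn_pres by simp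
  also have "\<dots> = (\<integral>x. f ((T ^^ n) x) \<partial>M)" by (rule integral_distr) auto
  finally show ?thesis by simp
qed

lemma int_T:
  fixes f :: "'a \<Rightarrow> real"
  assumes [measurable]: "f \<in> borel_measurable M"
  shows "(\<integral>x. f (T x) \<partial>M) = integral\<^sup>L M f"
  using int_Tn[OF assms, of 1] by simp

lemma Tn_space: "x \<in> space M \<Longrightarrow> (T ^^ n) x \<in> space M"
  using Tn_meas[of n] by (auto simp: measurable_def)

lemma T_space: "x \<in> space M \<Longrightarrow> T x \<in> space M"
  using T_meas by (auto simp: measurable_def)

definition S :: "nat \<Rightarrow> ('a \<Rightarrow> real) \<Rightarrow> 'a \<Rightarrow> real" where
  "S n f x = (\<Sum>i<n. f ((T ^^ i) x))"

lemma S_meas[measurable]: assumes [measurable]: "f \<in> borel_measurable M" shows "S n f \<in> borel_measurable M"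
  unfolding S_def by measurable

lemma S_0[simp]: "S 0 f x = 0" by (simp add: S_def)

lemma S_Suc: "S (Suc n) f x = f x + S n f (T x)"
  unfolding S_def sum.lessThan_Suc_shift by (simp add: funpow_Suc_right del: funpow.simps)

lemma S_bound: "x \<in> space M \<Longrightarrow> (\<And>y. y \<in> space M \<Longrightarrow> \<bar>f y\<bar> \<le> B) \<Longrightarrow> \<bar>S n f x\<bar> \<le> real n * B"
proof -
  assume x: "x \<in> space M" and b: "\<And>y. y \<in> space M \<Longrightarrow> \<bar>f y\<bar> \<le> B"
  have "\<bar>S n f x\<bar> \<le> (\<Sum>i<n. \<bar>f ((T ^^ i) x)\<bar>)" unfolding S_def by (rule sum_abs)
  also have "\<dots> \<le> (\<Sum>i<n. B)" by (intro sum_mono b Tn_space x)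
  finally show ?thesis by simp
qed

lemma S_minus: "S n (\<lambda>x. - f x) x = - S n f x" by (simp add: S_def sum_negf)
lemma S_diff_const: "S n (\<lambda>x. f x - t) x = S n f x - real n * t" by (simp add: S_def sum_subtractf)

primrec Mx :: "nat \<Rightarrow> ('a \<Rightarrow> real) \<Rightarrow> 'a \<Rightarrow> real" where
  "Mx 0 f x = 0"
| "Mx (Suc n) f x = max (Mx n f x) (S (Suc n) f x)"

lemma Mx_meas[measurable]: assumes [measurable]: "f \<in> borel_measurable M" shows "Mx n f \<in> borel_measurable M"
proof (induct n)
  case 0
  have "Mx 0 f = (\<lambda>x. 0)" by auto
  then show ?case by simp
next
  case (Suc n)
  note [measurable] = Suc
  have "Mx (Suc n) f = (\<lambda>x. max (Mx n f x) (S (Suc n) f x))" by auto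
  then show ?case by simp
qed

lemma Mx_nonneg: "0 \<le> Mx n f x" by (induct n) auto

lemma Mx_ge: "k \<le> n \<Longrightarrow> S k f x \<le> Mx n f x"
proof (induct n)
  case 0 then show ?case by simp
next
  case (Suc n) then show ?case by (cases "k = Suc n") (auto simp: le_Suc_eq max_def)
qed

lemma Mx_mono: "Mx n f x \<le> Mx (Suc n) f x" by simp

lemma Mx_attained: "0 < Mx n f x \<Longrightarrow> \<exists>k. 1 \<le> k \<and> k \<le> n \<and> Mx n f x = S k f x"
proof (induct n)
  case 0 then show ?case by simp
next
  case (Suc n)
  show ?case
  proof (cases "S (Suc n) f x \<le> Mx n f x")
    case True
    then have "Mx (Suc n) f x = Mx n f x" by simp
    with Suc show ?thesis by (metis le_SucI)
  next
    case False
    then show ?thesis by (intro exI[of _ "Suc n"]) auto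
  qed
qed

lemma Mx_key: "indicator {x. 0 < Mx n f x} x * f x \<ge> Mx n f x - Mx n f (T x)"
proof (cases "0 < Mx n f x")
  case True
  then obtain k where k: "1 \<le> k" "k \<le> n" "Mx n f x = S k f x" using Mx_attained by blast
  then obtain k' where k': "k = Suc k'" by (cases k) auto
  have "S k' f (T x) \<le> Mx n f (T x)" using k k' by (intro Mx_ge) auto
  then show ?thesis using True k k' S_Suc[of k' f x] by simp
next
  case False
  then have "Mx n f x = 0" using Mx_nonneg[of n f x] by simp
  then show ?thesis using Mx_nonneg[of n f "T x"] False by simp
qed

lemma Mx_bound: "x \<in> space M \<Longrightarrow> (\<And>y. y \<in> space M \<Longrightarrow> \<bar>f y\<bar> \<le> B) \<Longrightarrow> \<bar>Mx n f x\<bar> \<le> real n * B"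
proof (induct n)
  case 0
  then show ?case by simp
next
  case (Suc n)
  have B: "0 \<le> B" using Suc(3)[OF Suc(2)] by simp
  have "\<bar>S (Suc n) f x\<bar> \<le> real (Suc n) * B" by (rule S_bound[OF Suc(2,3)])
  moreover have "\<bar>Mx n f x\<bar> \<le> real (Suc n) * B"
  proof -
    have "\<bar>Mx n f x\<bar> \<le> real n * B" using Suc by blast
    also have "\<dots> \<le> real (Suc n) * B" using B by (intro mult_right_mono) auto
    finally show ?thesis .
  qed
  ultimately show ?case by (auto simp: abs_le_iff max_def)
qed

lemma bounded_integrable:
  fixes f :: "'a \<Rightarrow> real"
  shows "f \<in> borel_measurable M \<Longrightarrow> (\<And>y. y \<in> space M \<Longrightarrow> \<bar>f y\<bar> \<le> B) \<Longrightarrow> integrable M f"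
  by (rule integrable_const_bound[where B=B]) (auto intro!: AE_I2)

lemma maximal_ergodic:
  fixes f :: "'a \<Rightarrow> real"
  assumes [measurable]: "f \<in> borel_measurable M" and b: "\<And>y. y \<in> space M \<Longrightarrow> \<bar>f y\<bar> \<le> B"
  shows "0 \<le> (\<integral>x. indicator {x. 0 < Mx n f x} x * f x \<partial>M)"
proof -
  obtain y0 where "y0 \<in> space M" using not_empty by blast
  then have B: "0 \<le> B" using b[of y0] by simp
  have i1: "integrable M (Mx n f)" by (rule bounded_integrable[where B="real n * B"]) (auto intro: Mx_bound b)
  have i2: "integrable M (\<lambda>x. Mx n f (T x))"
    by (rule bounded_integrable[where B="real n * B"]) (auto intro: Mx_bound b T_space)
  have i3: "integrable M (\<lambda>x. indicator {x. 0 < Mx n f x} x * f x)"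
    by (rule bounded_integrable[where B="B"]) (auto intro: b B simp: indicator_def)
  have "0 = (\<integral>x. Mx n f x \<partial>M) - (\<integral>x. Mx n f (T x) \<partial>M)" by (simp add: int_T)
  also have "\<dots> = (\<integral>x. Mx n f x - Mx n f (T x) \<partial>M)" using i1 i2 by simp
  also have "\<dots> \<le> (\<integral>x. indicator {x. 0 < Mx n f x} x * f x \<partial>M)"
    by (intro integral_mono i3 Bochner_Integration.integrable_diff i1 i2 Mx_key)
  finally show ?thesis .
qed

end

lemma rat_between: "(x::real) < y \<Longrightarrow> \<exists>q::rat. x < real_of_rat q \<and> real_of_rat q < y"
  by (metis Rats_cases Rats_dense_in_real)

lemma freq_shift1:
  fixes a b :: "nat \<Rightarrow> real" and c t :: real
  assumes rel: "\<And>n. real (Suc n) * a (Suc n) = c + real n * b n"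
    and q: "t < real_of_rat q" "\<forall>N. \<exists>n\<ge>N. real_of_rat q < a n"
  shows "\<exists>q::rat. t < real_of_rat q \<and> (\<forall>N. \<exists>n\<ge>N. real_of_rat q < b n)"
proof -
  obtain q' :: rat where q': "t < real_of_rat q'" "real_of_rat q' < real_of_rat q" using rat_between[OF q(1)] by blast
  define d where "d = real_of_rat q - real_of_rat q'"
  have d: "0 < d" using q' by (simp add: d_def)
  obtain K :: nat where K: "(\<bar>c\<bar> + \<bar>real_of_rat q\<bar>) / d < real K" using reals_Archimedean2 by blast
  have "\<forall>N. \<exists>n\<ge>N. real_of_rat q' < b n"
  proof
    fix N
    obtain m where m: "m \<ge> N + K + 1" "real_of_rat q < a m" using q(2) by blast
    obtain n where n: "m = Suc n" using m by (cases m) auto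
    have nN: "n \<ge> N" "n \<ge> K" using m n by auto
    have Kd: "\<bar>c\<bar> + \<bar>real_of_rat q\<bar> < real K * d" using K d by (simp add: field_simps)
    have "real K * d \<le> real n * d" using nN d by (intro mult_right_mono) auto
    with Kd have nd: "\<bar>c\<bar> + \<bar>real_of_rat q\<bar> < real n * d" by linarith
    have npos: "0 < real n" using nd by (smt (verit) d mult_eq_0_iff mult_nonneg_nonneg of_nat_0_le_iff)
    have "real (Suc n) * real_of_rat q < real (Suc n) * a (Suc n)" using m n by (intro mult_strict_left_mono) auto
    then have "real (Suc n) * real_of_rat q < c + real n * b n" using rel[of n] by linarith
    moreover have "real (Suc n) * real_of_rat q = real n * real_of_rat q + real_of_rat q" by (simp add: algebra_simps)
    moreover have "real n * d = real n * real_of_rat q - real n * real_of_rat q'" by (simp add: d_def algebra_simps)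
    moreover have "c \<le> \<bar>c\<bar>" "- real_of_rat q \<le> \<bar>real_of_rat q\<bar>" by (rule abs_ge_self, rule abs_ge_minus_self)
    ultimately have "real n * real_of_rat q' < real n * b n" using nd by linarith
    then have "real_of_rat q' < b n" using npos by simp
    then show "\<exists>n\<ge>N. real_of_rat q' < b n" using nN by blast
  qed
  then show ?thesis using q' by blast
qed

lemma freq_shift2:
  fixes a b :: "nat \<Rightarrow> real" and c t :: real
  assumes rel: "\<And>n. real (Suc n) * a (Suc n) = c + real n * b n"
    and q: "t < real_of_rat q" "\<forall>N. \<exists>n\<ge>N. real_of_rat q < b n"
  shows "\<exists>q::rat. t < real_of_rat q \<and> (\<forall>N. \<exists>n\<ge>N. real_of_rat q < a n)"
proof -
  obtain q' :: rat where q': "t < real_of_rat q'" "real_of_rat q' < real_of_rat q" using rat_between[OF q(1)] by blast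
  define d where "d = real_of_rat q - real_of_rat q'"
  have d: "0 < d" using q' by (simp add: d_def)
  obtain K :: nat where K: "(\<bar>c\<bar> + \<bar>real_of_rat q'\<bar>) / d < real K" using reals_Archimedean2 by blast
  have "\<forall>N. \<exists>n\<ge>N. real_of_rat q' < a n"
  proof
    fix N
    obtain n where n: "n \<ge> N + K" "real_of_rat q < b n" using q(2) by blast
    have Kd: "\<bar>c\<bar> + \<bar>real_of_rat q'\<bar> < real K * d" using K d by (simp add: field_simps)
    have "real K * d \<le> real n * d" using n d by (intro mult_right_mono) auto
    with Kd have nd: "\<bar>c\<bar> + \<bar>real_of_rat q'\<bar> < real n * d" by linarith
    have "real n * real_of_rat q \<le> real n * b n" using n by (intro mult_left_mono) auto
    moreover have "real (Suc n) * real_of_rat q' = real n * real_of_rat q' + real_of_rat q'" by (simp add: algebra_simps)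
    moreover have "real n * d = real n * real_of_rat q - real n * real_of_rat q'" by (simp add: d_def algebra_simps)
    moreover have "- c \<le> \<bar>c\<bar>" "real_of_rat q' \<le> \<bar>real_of_rat q'\<bar>" by (rule abs_ge_minus_self, rule abs_ge_self)
    ultimately have "real (Suc n) * real_of_rat q' < real (Suc n) * a (Suc n)"
      using rel[of n] nd by linarith
    then have "real_of_rat q' < a (Suc n)" by (simp del: of_nat_Suc)
    then show "\<exists>n\<ge>N. real_of_rat q' < a n" using n by (intro exI[of _ "Suc n"]) auto
  qed
  then show ?thesis using q' by blast
qed

lemma upper_from:
  fixes a :: "nat \<Rightarrow> real"
  assumes h: "\<forall>q::rat. c < real_of_rat q \<longrightarrow> \<not>(\<exists>q'::rat. real_of_rat q < real_of_rat q' \<and> (\<forall>N. \<exists>n\<ge>N. real_of_rat q' < a n))"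
    and r: "0 < r"
  shows "\<exists>N. \<forall>n\<ge>N. a n < c + r"
proof -
  obtain q1 :: rat where q1: "c < real_of_rat q1" "real_of_rat q1 < c + r" using rat_between[of c "c+r"] r by auto
  obtain q2 :: rat where q2: "real_of_rat q1 < real_of_rat q2" "real_of_rat q2 < c + r" using rat_between[OF q1(2)] by auto
  have "\<not>(\<forall>N. \<exists>n\<ge>N. real_of_rat q2 < a n)" using h q1 q2 by blast
  then obtain N where "\<forall>n\<ge>N. a n \<le> real_of_rat q2" by (auto simp: not_less)
  then show ?thesis using q2 by (meson le_less_trans)
qed

locale emps = mps +
  assumes erg: "\<And>A. A \<in> sets M \<Longrightarrow> T -` A \<inter> space M = A \<Longrightarrow> measure M A = 0 \<or> measure M A = 1"
begin

definition U :: "('a \<Rightarrow> real) \<Rightarrow> real \<Rightarrow> 'a set" where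
  "U G t = {x \<in> space M. \<exists>q::rat. t < real_of_rat q \<and> (\<forall>N. \<exists>n\<ge>N. real_of_rat q < S n G x / real n)}"

lemma U_sets: assumes [measurable]: "G \<in> borel_measurable M" shows "U G t \<in> sets M"
  unfolding U_def by measurable

lemma U_mem: "x \<in> space M \<Longrightarrow> x \<in> U G t \<longleftrightarrow> (\<exists>q::rat. t < real_of_rat q \<and> (\<forall>N. \<exists>n\<ge>N. real_of_rat q < S n G x / real n))"
  unfolding U_def by simp

lemma U_inv: "T -` U G t \<inter> space M = U G t"
proof -
  have rel: "real (Suc n) * (S (Suc n) G x / real (Suc n)) = G x + real n * (S n G (T x) / real n)" for n x
    by (cases "n = 0") (auto simp: S_Suc)
  have "T x \<in> U G t \<longleftrightarrow> x \<in> U G t" if x: "x \<in> space M" for x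
  proof
    assume "T x \<in> U G t"
    then obtain q where q: "t < real_of_rat q" "\<forall>N. \<exists>n\<ge>N. real_of_rat q < S n G (T x) / real n"
      unfolding U_def by blast
    obtain q' where "t < real_of_rat q'" "\<forall>N. \<exists>n\<ge>N. real_of_rat q' < S n G x / real n"
      using freq_shift2[OF rel[of _ x] q] by blast
    then show "x \<in> U G t" using x unfolding U_def by blast
  next
    assume "x \<in> U G t"
    then obtain q where q: "t < real_of_rat q" "\<forall>N. \<exists>n\<ge>N. real_of_rat q < S n G x / real n"
      unfolding U_def by blast
    obtain q' where "t < real_of_rat q'" "\<forall>N. \<exists>n\<ge>N. real_of_rat q' < S n G (T x) / real n"
      using freq_shift1[OF rel[of _ x] q] by blast
    then show "T x \<in> U G t" using T_space[OF x] unfolding U_def by blast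
  qed
  moreover have "U G t \<subseteq> space M" unfolding U_def by auto
  ultimately show ?thesis by blast
qed

lemma U_null:
  assumes [measurable]: "G \<in> borel_measurable M" and b: "\<And>y. y \<in> space M \<Longrightarrow> \<bar>G y\<bar> \<le> B"
    and t: "integral\<^sup>L M G < t"
  shows "measure M (U G t) = 0"
proof (rule ccontr)
  assume "measure M (U G t) \<noteq> 0"
  then have "measure M (U G t) = 1" using erg[OF U_sets[OF assms(1)] U_inv] by auto
  then have aeU: "AE x in M. x \<in> U G t" using prob_eq_1[OF U_sets[OF assms(1)]] by simp
  define f where "f = (\<lambda>x. G x - t)"
  have [measurable]: "f \<in> borel_measurable M" unfolding f_def by measurable
  have fb: "\<bar>f y\<bar> \<le> B + \<bar>t\<bar>" if "y \<in> space M" for y using b[OF that] unfolding f_def by linarith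
  define s where "s = (\<lambda>n x. indicator {x. 0 < Mx n f x} x * f x)"
  have [measurable]: "s n \<in> borel_measurable M" for n unfolding s_def by measurable
  have lim: "AE x in M. (\<lambda>n. s n x) \<longlonglongrightarrow> f x"
    using aeU
  proof eventually_elim
    case (elim x)
    then obtain q :: rat where q: "t < real_of_rat q" "\<forall>N. \<exists>n\<ge>N. real_of_rat q < S n G x / real n"
      unfolding U_def by blast
    then obtain n where n: "n \<ge> 1" "real_of_rat q < S n G x / real n" by blast
    then have "real_of_rat q * real n < S n G x" using n(1) by (simp add: less_divide_eq)
    moreover have "t * real n < real_of_rat q * real n" using q(1) n(1) by (intro mult_strict_right_mono) auto
    ultimately have "real n * t < S n G x" by (simp add: mult.commute)
    then have "0 < S n f x" unfolding f_def S_diff_const by simp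
    then have pos: "0 < Mx n f x" using Mx_ge[of n n f x] by simp
    have "0 < Mx m f x" if "m \<ge> n" for m
    proof -
      have "Mx n f x \<le> Mx m f x" using lift_Suc_mono_le[of "\<lambda>k. Mx k f x" n m] that by simp
      then show ?thesis using pos by simp
    qed
    then have "\<forall>m\<ge>n. s m x = f x" unfolding s_def by (auto simp: indicator_def)
    then have "\<forall>\<^sub>F m in sequentially. s m x = f x" unfolding eventually_sequentially by blast
    then show ?case by (rule tendsto_eventually)
  qed
  have L: "(\<lambda>n. integral\<^sup>L M (s n)) \<longlonglongrightarrow> integral\<^sup>L M f"
  proof (rule integral_dominated_convergence[where w="\<lambda>x. B + \<bar>t\<bar>"])
    show "integrable M (\<lambda>x. B + \<bar>t\<bar>)" by simp
    show "AE x in M. norm (s n x) \<le> B + \<bar>t\<bar>" for n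
    proof (rule AE_I2)
      fix x assume x: "x \<in> space M"
      have "\<bar>s n x\<bar> \<le> \<bar>f x\<bar>" by (simp add: s_def indicator_def)
      then show "norm (s n x) \<le> B + \<bar>t\<bar>" using fb[OF x] by simp
    qed
  qed (simp_all add: lim)
  have "0 \<le> integral\<^sup>L M (s n)" for n unfolding s_def by (rule maximal_ergodic[OF _ fb]) simp
  then have "0 \<le> integral\<^sup>L M f" using LIMSEQ_le_const[OF L] by blast
  moreover have "integral\<^sup>L M f = integral\<^sup>L M G - t"
  proof -
    have "integrable M G" by (rule bounded_integrable[OF assms(1) b])
    then have "integral\<^sup>L M f = integral\<^sup>L M G - integral\<^sup>L M (\<lambda>x. t)"
      unfolding f_def by (rule Bochner_Integration.integral_diff) simp
    moreover have "integral\<^sup>L M (\<lambda>x. t) = t" using prob_space by simp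
    ultimately show ?thesis by simp
  qed
  ultimately show False using t by linarith
qed

lemma birkhoff_upper:
  assumes [measurable]: "G \<in> borel_measurable M" and b: "\<And>y. y \<in> space M \<Longrightarrow> \<bar>G y\<bar> \<le> B"
  shows "AE x in M. \<forall>r>0. \<exists>N. \<forall>n\<ge>N. S n G x / real n < integral\<^sup>L M G + r"
proof -
  have "AE x in M. \<forall>q::rat. integral\<^sup>L M G < real_of_rat q \<longrightarrow> x \<notin> U G (real_of_rat q)"
    unfolding AE_all_countable
  proof
    fix q :: rat
    show "AE x in M. integral\<^sup>L M G < real_of_rat q \<longrightarrow> x \<notin> U G (real_of_rat q)"
    proof (cases "integral\<^sup>L M G < real_of_rat q")
      case True
      then have "AE x in M. x \<notin> U G (real_of_rat q)" using U_null[OF assms(1) b True] prob_eq_0[OF U_sets[OF assms(1)]] by simp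
      then show ?thesis using True by simp
    qed simp
  qed
  then show ?thesis using AE_space
  proof eventually_elim
    case (elim x)
    have h: "\<forall>q::rat. integral\<^sup>L M G < real_of_rat q \<longrightarrow> \<not>(\<exists>q'::rat. real_of_rat q < real_of_rat q' \<and> (\<forall>N. \<exists>n\<ge>N. real_of_rat q' < S n G x / real n))"
    proof (intro allI impI)
      fix q :: rat assume "integral\<^sup>L M G < real_of_rat q"
      then have "x \<notin> U G (real_of_rat q)" using elim(1) by blast
      then show "\<not>(\<exists>q'::rat. real_of_rat q < real_of_rat q' \<and> (\<forall>N. \<exists>n\<ge>N. real_of_rat q' < S n G x / real n))"
        using U_mem[OF elim(2), of G "real_of_rat q"] by simp
    qed
    show ?case using upper_from[OF h] by simp
  qed
qed

lemma birkhoff_ae: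
  assumes [measurable]: "G \<in> borel_measurable M" and b: "\<And>y. y \<in> space M \<Longrightarrow> \<bar>G y\<bar> \<le> B"
  shows "AE x in M. (\<lambda>n. S n G x / real n) \<longlonglongrightarrow> integral\<^sup>L M G"
proof -
  have b': "\<bar>- G y\<bar> \<le> B" if "y \<in> space M" for y using b[OF that] by simp
  have up': "AE x in M. \<forall>r>0. \<exists>N. \<forall>n\<ge>N. S n (\<lambda>x. - G x) x / real n < integral\<^sup>L M (\<lambda>x. - G x) + r"
    by (rule birkhoff_upper[OF borel_measurable_uminus[OF assms(1)] b'])
  have lo: "AE x in M. \<forall>r>0. \<exists>N. \<forall>n\<ge>N. - (S n G x / real n) < - integral\<^sup>L M G + r"
    using up' by (simp add: S_minus)
  have conj: "AE x in M. (\<forall>r>0. \<exists>N. \<forall>n\<ge>N. S n G x / real n < integral\<^sup>L M G + r) \<and>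
      (\<forall>r>0. \<exists>N. \<forall>n\<ge>N. - (S n G x / real n) < - integral\<^sup>L M G + r)"
    by (rule AE_conjI[OF birkhoff_upper[OF assms(1) b] lo])
  show ?thesis
  proof (rule eventually_mono[OF conj])
    fix x assume elim: "(\<forall>r>0. \<exists>N. \<forall>n\<ge>N. S n G x / real n < integral\<^sup>L M G + r) \<and>
      (\<forall>r>0. \<exists>N. \<forall>n\<ge>N. - (S n G x / real n) < - integral\<^sup>L M G + r)"
    show "(\<lambda>n. S n G x / real n) \<longlonglongrightarrow> integral\<^sup>L M G" unfolding LIMSEQ_iff
    proof (intro allI impI)
      fix r :: real assume r: "0 < r"
      obtain N1 where N1: "\<forall>n\<ge>N1. S n G x / real n < integral\<^sup>L M G + r" using elim r by blast
      obtain N2 where N2: "\<forall>n\<ge>N2. - (S n G x / real n) < - integral\<^sup>L M G + r" using elim r by blast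
      have "norm (S n G x / real n - integral\<^sup>L M G) < r" if n: "n \<ge> max N1 N2" for n
      proof -
        have "S n G x / real n < integral\<^sup>L M G + r" using N1 n by simp
        moreover have "- (S n G x / real n) < - integral\<^sup>L M G + r" using N2 n by simp
        ultimately show ?thesis unfolding real_norm_def abs_less_iff by linarith
      qed
      then show "\<exists>no. \<forall>n\<ge>no. norm (S n G x / real n - integral\<^sup>L M G) < r" by blast
    qed
  qed
qed

lemma avg_bound:
  assumes x: "x \<in> space M" and b: "\<And>y. y \<in> space M \<Longrightarrow> \<bar>f y\<bar> \<le> B"
  shows "\<bar>S n f x / real n\<bar> \<le> B"
proof (cases "n = 0")
  case True
  have "0 \<le> B" using b[OF x] by linarith
  then show ?thesis using True by simp
next
  case False
  have sb: "\<bar>S n f x\<bar> \<le> real n * B" by (rule S_bound[OF x b])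
  have "\<bar>S n f x / real n\<bar> = \<bar>S n f x\<bar> / real n" by (simp add: abs_divide)
  also have "\<dots> \<le> real n * B / real n" by (rule divide_right_mono[OF sb]) simp
  also have "\<dots> = B" using False by simp
  finally show ?thesis .
qed

lemma birkhoff_L1:
  assumes [measurable]: "G \<in> borel_measurable M" and b: "\<And>y. y \<in> space M \<Longrightarrow> \<bar>G y\<bar> \<le> B"
  shows "(\<lambda>n. \<integral>x. \<bar>S n G x / real n - integral\<^sup>L M G\<bar> \<partial>M) \<longlonglongrightarrow> 0"
proof -
  define c where "c = integral\<^sup>L M G"
  have m: "(\<lambda>x. \<bar>S n G x / real n - c\<bar>) \<in> borel_measurable M" for n
    by (intro borel_measurable_abs borel_measurable_diff borel_measurable_divide borel_measurable_const S_meas[OF assms(1)])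
  have ae: "AE x in M. (\<lambda>n. \<bar>S n G x / real n - c\<bar>) \<longlonglongrightarrow> 0"
  proof (rule eventually_mono[OF birkhoff_ae[OF assms(1) b]])
    fix x assume "(\<lambda>n. S n G x / real n) \<longlonglongrightarrow> integral\<^sup>L M G"
    then have "(\<lambda>n. S n G x / real n - c) \<longlonglongrightarrow> 0" unfolding c_def by (rule LIM_zero)
    then show "(\<lambda>n. \<bar>S n G x / real n - c\<bar>) \<longlonglongrightarrow> 0" by (rule tendsto_rabs_zero)
  qed
  have bd: "AE x in M. norm \<bar>S n G x / real n - c\<bar> \<le> B + \<bar>c\<bar>" for n
  proof (rule AE_I2)
    fix x assume x: "x \<in> space M"
    have "\<bar>S n G x / real n\<bar> \<le> B" by (rule avg_bound[OF x b])
    then show "norm \<bar>S n G x / real n - c\<bar> \<le> B + \<bar>c\<bar>" unfolding real_norm_def by linarith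
  qed
  have "(\<lambda>n. \<integral>x. \<bar>S n G x / real n - c\<bar> \<partial>M) \<longlonglongrightarrow> (\<integral>x. 0 \<partial>M)"
    by (rule integral_dominated_convergence[where w="\<lambda>x. B + \<bar>c\<bar>", OF borel_measurable_const m integrable_const ae bd])
  then show ?thesis unfolding c_def by simp
qed

end

lemma abs_int_le:
  fixes f g :: "'a \<Rightarrow> real"
  assumes g: "integrable M g" and fm: "f \<in> borel_measurable M" and b: "\<And>x. x \<in> space M \<Longrightarrow> \<bar>f x\<bar> \<le> g x"
  shows "\<bar>integral\<^sup>L M f\<bar> \<le> integral\<^sup>L M g"
proof -
  have fi: "integrable M f"
    by (rule Bochner_Integration.integrable_bound[OF g fm]) (rule AE_I2, use b in \<open>fastforce\<close>)
  have "\<bar>integral\<^sup>L M f\<bar> \<le> (\<integral>x. \<bar>f x\<bar> \<partial>M)" by (rule integral_abs_bound)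
  also have "\<dots> \<le> integral\<^sup>L M g" by (rule integral_mono[OF integrable_abs[OF fi] g b])
  finally show ?thesis .
qed

lemma aux_diff2: "\<bar>a::real\<bar> \<le> 1 \<Longrightarrow> \<bar>b\<bar> \<le> 1 \<Longrightarrow> \<bar>\<bar>a - b\<bar>\<bar> \<le> 2" by linarith
lemma aux_mult: "\<bar>a::real\<bar> \<le> C \<Longrightarrow> \<bar>b\<bar> \<le> 1 \<Longrightarrow> \<bar>a * b\<bar> \<le> C"
proof -
  assume a: "\<bar>a\<bar> \<le> C" and b: "\<bar>b\<bar> \<le> 1"
  have "\<bar>a * b\<bar> = \<bar>a\<bar> * \<bar>b\<bar>" by (rule abs_mult)
  also have "\<dots> \<le> C * 1" using a b by (intro mult_mono) auto
  finally show ?thesis by simp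
qed

context mps
begin

lemma int_shift_k:
  fixes F :: "'a \<Rightarrow> real"
  assumes Fm[measurable]: "F \<in> borel_measurable M" and Fb: "\<And>x. x \<in> space M \<Longrightarrow> \<bar>F x\<bar> \<le> 1"
  shows "(\<integral>x. \<bar>F ((T ^^ k) x) - F x\<bar> \<partial>M) \<le> real k * (\<integral>x. \<bar>F (T x) - F x\<bar> \<partial>M)"
proof (induct k)
  case 0
  then show ?case by simp
next
  case (Suc k)
  have m1: "(\<lambda>x. \<bar>F ((T ^^ k) x) - F x\<bar>) \<in> borel_measurable M" by measurable
  have m2: "(\<lambda>x. \<bar>F (T x) - F x\<bar>) \<in> borel_measurable M" by measurable
  have m3: "(\<lambda>x. \<bar>F ((T ^^ Suc k) x) - F x\<bar>) \<in> borel_measurable M" by measurable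
  have m4: "(\<lambda>x. \<bar>F ((T ^^ k) (T x)) - F (T x)\<bar>) \<in> borel_measurable M" by measurable
  have i2: "integrable M (\<lambda>x. \<bar>F (T x) - F x\<bar>)"
    by (rule bounded_integrable[OF m2, where B=2]) (use Fb T_space in \<open>blast intro: aux_diff2\<close>)
  have i3: "integrable M (\<lambda>x. \<bar>F ((T ^^ Suc k) x) - F x\<bar>)"
    by (rule bounded_integrable[OF m3, where B=2]) (use Fb Tn_space in \<open>blast intro: aux_diff2\<close>)
  have i4: "integrable M (\<lambda>x. \<bar>F ((T ^^ k) (T x)) - F (T x)\<bar>)"
    by (rule bounded_integrable[OF m4, where B=2]) (use Fb Tn_space T_space in \<open>blast intro: aux_diff2\<close>)
  have "(\<integral>x. \<bar>F ((T ^^ Suc k) x) - F x\<bar> \<partial>M)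
      \<le> (\<integral>x. \<bar>F ((T ^^ k) (T x)) - F (T x)\<bar> + \<bar>F (T x) - F x\<bar> \<partial>M)"
  proof (rule integral_mono[OF i3 Bochner_Integration.integrable_add[OF i4 i2]])
    fix x assume "x \<in> space M"
    have "(T ^^ Suc k) x = (T ^^ k) (T x)" by (simp add: funpow_Suc_right del: funpow.simps)
    then show "\<bar>F ((T ^^ Suc k) x) - F x\<bar> \<le> \<bar>F ((T ^^ k) (T x)) - F (T x)\<bar> + \<bar>F (T x) - F x\<bar>" by simp
  qed
  also have "\<dots> = (\<integral>x. \<bar>F ((T ^^ k) (T x)) - F (T x)\<bar> \<partial>M) + (\<integral>x. \<bar>F (T x) - F x\<bar> \<partial>M)"
    by (rule Bochner_Integration.integral_add[OF i4 i2])
  also have "(\<integral>x. \<bar>F ((T ^^ k) (T x)) - F (T x)\<bar> \<partial>M) = (\<integral>x. \<bar>F ((T ^^ k) x) - F x\<bar> \<partial>M)"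
    by (rule int_T[OF m1])
  finally show ?case using Suc by (simp add: algebra_simps)
qed

lemma int_shift_G:
  fixes F G :: "'a \<Rightarrow> real"
  assumes Fm[measurable]: "F \<in> borel_measurable M" and Fb: "\<And>x. x \<in> space M \<Longrightarrow> \<bar>F x\<bar> \<le> 1"
    and Gm[measurable]: "G \<in> borel_measurable M" and Gb: "\<And>x. x \<in> space M \<Longrightarrow> \<bar>G x\<bar> \<le> C"
  shows "\<bar>(\<integral>x. G ((T ^^ k) x) * F x \<partial>M) - (\<integral>x. G x * F x \<partial>M)\<bar>
           \<le> C * (\<integral>x. \<bar>F ((T ^^ k) x) - F x\<bar> \<partial>M)"
proof -
  have m1: "(\<lambda>x. G x * F x) \<in> borel_measurable M" by measurable
  have e: "(\<integral>x. G x * F x \<partial>M) = (\<integral>x. G ((T ^^ k) x) * F ((T ^^ k) x) \<partial>M)"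
    using int_Tn[OF m1, of k] by simp
  have ia: "integrable M (\<lambda>x. G ((T ^^ k) x) * F x)"
    by (rule bounded_integrable[where B=C]) (measurable, use Fb Gb Tn_space in \<open>blast intro: aux_mult\<close>)
  have ib: "integrable M (\<lambda>x. G ((T ^^ k) x) * F ((T ^^ k) x))"
    by (rule bounded_integrable[where B=C]) (measurable, use Fb Gb Tn_space in \<open>blast intro: aux_mult\<close>)
  have md: "(\<lambda>x. \<bar>F ((T ^^ k) x) - F x\<bar>) \<in> borel_measurable M" by measurable
  have id: "integrable M (\<lambda>x. \<bar>F ((T ^^ k) x) - F x\<bar>)"
    by (rule bounded_integrable[OF md, where B=2]) (use Fb Tn_space in \<open>blast intro: aux_diff2\<close>)
  have "(\<integral>x. G ((T ^^ k) x) * F x \<partial>M) - (\<integral>x. G x * F x \<partial>M)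
      = (\<integral>x. G ((T ^^ k) x) * F x - G ((T ^^ k) x) * F ((T ^^ k) x) \<partial>M)"
    unfolding e by (rule Bochner_Integration.integral_diff[OF ia ib, symmetric])
  also have "\<bar>\<dots>\<bar> \<le> (\<integral>x. C * \<bar>F ((T ^^ k) x) - F x\<bar> \<partial>M)"
  proof (rule abs_int_le)
    show "integrable M (\<lambda>x. C * \<bar>F ((T ^^ k) x) - F x\<bar>)" by (rule integrable_mult_right[OF id])
    show "(\<lambda>x. G ((T ^^ k) x) * F x - G ((T ^^ k) x) * F ((T ^^ k) x)) \<in> borel_measurable M" by measurable
    fix x assume x: "x \<in> space M"
    have "\<bar>G ((T ^^ k) x) * F x - G ((T ^^ k) x) * F ((T ^^ k) x)\<bar> = \<bar>G ((T ^^ k) x)\<bar> * \<bar>F ((T ^^ k) x) - F x\<bar>"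
    proof -
      have "G ((T ^^ k) x) * F x - G ((T ^^ k) x) * F ((T ^^ k) x) = G ((T ^^ k) x) * (F x - F ((T ^^ k) x))"
        by (simp add: right_diff_distrib)
      then show ?thesis by (simp only: abs_mult abs_minus_commute)
    qed
    also have "\<dots> \<le> C * \<bar>F ((T ^^ k) x) - F x\<bar>" by (rule mult_right_mono[OF Gb[OF Tn_space[OF x]]]) simp
    finally show "\<bar>G ((T ^^ k) x) * F x - G ((T ^^ k) x) * F ((T ^^ k) x)\<bar> \<le> C * \<bar>F ((T ^^ k) x) - F x\<bar>" .
  qed
  also have "\<dots> = C * (\<integral>x. \<bar>F ((T ^^ k) x) - F x\<bar> \<partial>M)" by simp
  finally show ?thesis .
qed

lemma avg_shift:
  fixes F G :: "'a \<Rightarrow> real"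
  assumes Fm[measurable]: "F \<in> borel_measurable M" and Fb: "\<And>x. x \<in> space M \<Longrightarrow> \<bar>F x\<bar> \<le> 1"
    and Gm[measurable]: "G \<in> borel_measurable M" and Gb: "\<And>x. x \<in> space M \<Longrightarrow> \<bar>G x\<bar> \<le> C"
    and n: "0 < n"
  shows "\<bar>(\<integral>x. S n G x / real n * F x \<partial>M) - (\<integral>x. G x * F x \<partial>M)\<bar>
           \<le> C * real n * (\<integral>x. \<bar>F (T x) - F x\<bar> \<partial>M)"
proof -
  define \<delta> where "\<delta> = (\<integral>x. \<bar>F (T x) - F x\<bar> \<partial>M)"
  have C0: "0 \<le> C" using Gb[of "SOME x. x \<in> space M"] not_empty some_in_eq by (metis abs_ge_zero order_trans)
  have \<delta>0: "0 \<le> \<delta>" unfolding \<delta>_def by (rule integral_nonneg_AE) simp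
  have ik: "integrable M (\<lambda>x. G ((T ^^ k) x) * F x)" for k
    by (rule bounded_integrable[where B=C]) (measurable, use Fb Gb Tn_space in \<open>blast intro: aux_mult\<close>)
  have "(\<integral>x. S n G x / real n * F x \<partial>M) = (\<integral>x. (\<Sum>k<n. G ((T ^^ k) x) * F x) / real n \<partial>M)"
    by (simp add: S_def sum_distrib_right)
  also have "\<dots> = (\<integral>x. (\<Sum>k<n. G ((T ^^ k) x) * F x) \<partial>M) / real n"
    by (rule integral_divide_zero)
  also have "(\<integral>x. (\<Sum>k<n. G ((T ^^ k) x) * F x) \<partial>M) = (\<Sum>k<n. (\<integral>x. G ((T ^^ k) x) * F x \<partial>M))"
    by (rule Bochner_Integration.integral_sum[where f="\<lambda>k x. G ((T ^^ k) x) * F x"]) (rule ik)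
  finally have eq: "(\<integral>x. S n G x / real n * F x \<partial>M) = (\<Sum>k<n. (\<integral>x. G ((T ^^ k) x) * F x \<partial>M)) / real n" .
  have "(\<integral>x. S n G x / real n * F x \<partial>M) - (\<integral>x. G x * F x \<partial>M)
      = (\<Sum>k<n. (\<integral>x. G ((T ^^ k) x) * F x \<partial>M) - (\<integral>x. G x * F x \<partial>M)) / real n"
    unfolding eq using n by (simp add: sum_subtractf field_simps)
  also have "\<bar>\<dots>\<bar> = \<bar>\<Sum>k<n. (\<integral>x. G ((T ^^ k) x) * F x \<partial>M) - (\<integral>x. G x * F x \<partial>M)\<bar> / real n"
    by (simp add: abs_divide)
  also have "\<dots> \<le> (\<Sum>k<n. C * real n * \<delta>) / real n"
  proof (rule divide_right_mono)
    have "\<bar>\<Sum>k<n. (\<integral>x. G ((T ^^ k) x) * F x \<partial>M) - (\<integral>x. G x * F x \<partial>M)\<bar>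
        \<le> (\<Sum>k<n. \<bar>(\<integral>x. G ((T ^^ k) x) * F x \<partial>M) - (\<integral>x. G x * F x \<partial>M)\<bar>)" by (rule sum_abs)
    also have "\<dots> \<le> (\<Sum>k<n. C * real n * \<delta>)"
    proof (rule sum_mono)
      fix k assume k: "k \<in> {..<n}"
      have "\<bar>(\<integral>x. G ((T ^^ k) x) * F x \<partial>M) - (\<integral>x. G x * F x \<partial>M)\<bar> \<le> C * (\<integral>x. \<bar>F ((T ^^ k) x) - F x\<bar> \<partial>M)"
        by (rule int_shift_G[OF Fm Fb Gm Gb])
      also have "\<dots> \<le> C * (real k * \<delta>)"
        unfolding \<delta>_def by (rule mult_left_mono[OF int_shift_k[OF Fm Fb] C0])
      also have "\<dots> \<le> C * real n * \<delta>"
        using k C0 \<delta>0 by (simp add: mult.assoc mult_left_mono mult_right_mono)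
      finally show "\<bar>(\<integral>x. G ((T ^^ k) x) * F x \<partial>M) - (\<integral>x. G x * F x \<partial>M)\<bar> \<le> C * real n * \<delta>" .
    qed
    finally show "\<bar>\<Sum>k<n. (\<integral>x. G ((T ^^ k) x) * F x \<partial>M) - (\<integral>x. G x * F x \<partial>M)\<bar> \<le> (\<Sum>k<n. C * real n * \<delta>)" .
  qed simp
  also have "\<dots> = C * real n * \<delta>" using n by simp
  finally show ?thesis unfolding \<delta>_def .
qed

end

context emps
begin

lemma trunc_L1:
  fixes h :: "'a \<Rightarrow> real"
  assumes hm[measurable]: "h \<in> borel_measurable M" and hpos: "\<And>x. x \<in> space M \<Longrightarrow> 0 \<le> h x"
    and hi: "integrable M h" and eta: "0 < \<eta>"
  shows "\<exists>m::nat. (\<integral>x. h x - min (h x) (real m) \<partial>M) < \<eta>"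
proof -
  have "(\<lambda>m::nat. \<integral>x. h x - min (h x) (real m) \<partial>M) \<longlonglongrightarrow> (\<integral>x. 0 \<partial>M)"
  proof (rule integral_dominated_convergence[where w=h])
    show "(\<lambda>x. 0::real) \<in> borel_measurable M" by (rule borel_measurable_const)
    show "(\<lambda>x. h x - min (h x) (real m)) \<in> borel_measurable M" for m by measurable
    show "integrable M h" by (rule hi)
    show "AE x in M. (\<lambda>m. h x - min (h x) (real m)) \<longlonglongrightarrow> 0"
    proof (rule AE_I2)
      fix x assume x: "x \<in> space M"
      have "\<forall>m\<ge>nat \<lceil>h x\<rceil>. h x - min (h x) (real m) = 0"
      proof (intro allI impI)
        fix m assume "m \<ge> nat \<lceil>h x\<rceil>"
        then have "h x \<le> real m" by linarith
        then show "h x - min (h x) (real m) = 0" by simp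
      qed
      then have "\<forall>\<^sub>F m in sequentially. h x - min (h x) (real m) = 0" unfolding eventually_sequentially by blast
      then show "(\<lambda>m. h x - min (h x) (real m)) \<longlonglongrightarrow> 0" by (rule tendsto_eventually)
    qed
    show "AE x in M. norm (h x - min (h x) (real m)) \<le> h x" for m
      by (rule AE_I2) (use hpos in \<open>auto simp: min_def\<close>)
  qed
  then have "(\<lambda>m::nat. \<integral>x. h x - min (h x) (real m) \<partial>M) \<longlonglongrightarrow> 0" by simp
  from order_tendstoD(2)[OF this eta] obtain m where "(\<integral>x. h x - min (h x) (real m) \<partial>M) < \<eta>"
    unfolding eventually_sequentially by blast
  then show ?thesis by blast
qed

lemma density_mixing:
  fixes h :: "'a \<Rightarrow> real" and F :: "nat \<Rightarrow> 'a \<Rightarrow> real"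
  assumes hm[measurable]: "h \<in> borel_measurable M" and hpos: "\<And>x. x \<in> space M \<Longrightarrow> 0 \<le> h x"
    and hi: "integrable M h"
    and Fm[measurable]: "\<And>l. F l \<in> borel_measurable M" and Fb: "\<And>l x. x \<in> space M \<Longrightarrow> \<bar>F l x\<bar> \<le> 1"
    and Fi: "(\<lambda>l. \<integral>x. \<bar>F l (T x) - F l x\<bar> \<partial>M) \<longlonglongrightarrow> 0"
  shows "(\<lambda>l. (\<integral>x. h x * F l x \<partial>M) - (\<integral>x. h x \<partial>M) * (\<integral>x. F l x \<partial>M)) \<longlonglongrightarrow> 0"
proof (rule LIMSEQ_I)
  fix \<epsilon> :: real assume e: "0 < \<epsilon>"
  obtain m :: nat where m: "(\<integral>x. h x - min (h x) (real m) \<partial>M) < \<epsilon> / 4"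
    using trunc_L1[OF hm hpos hi, of "\<epsilon>/4"] e by auto
  define G where "G = (\<lambda>x. min (h x) (real m))"
  have Gm[measurable]: "G \<in> borel_measurable M" unfolding G_def by measurable
  have Gb: "\<bar>G x\<bar> \<le> real m" if "x \<in> space M" for x using hpos[OF that] unfolding G_def by auto
  have Gi: "integrable M G" by (rule bounded_integrable[OF Gm Gb])
  have hGm: "(\<lambda>x. h x - G x) \<in> borel_measurable M" by measurable
  have hGi: "integrable M (\<lambda>x. h x - G x)" by (rule Bochner_Integration.integrable_diff[OF hi Gi])
  have hG: "(\<integral>x. h x - G x \<partial>M) < \<epsilon> / 4" using m unfolding G_def .
  have hG0: "0 \<le> h x - G x" for x unfolding G_def by simp
  have cG: "\<bar>integral\<^sup>L M G - integral\<^sup>L M h\<bar> < \<epsilon> / 4"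
  proof -
    have "integral\<^sup>L M h - integral\<^sup>L M G = (\<integral>x. h x - G x \<partial>M)"
      by (rule Bochner_Integration.integral_diff[OF hi Gi, symmetric])
    moreover have "0 \<le> (\<integral>x. h x - G x \<partial>M)" by (rule integral_nonneg_AE, rule AE_I2, rule hG0)
    ultimately show ?thesis using hG by linarith
  qed
  have SGm: "S k G \<in> borel_measurable M" for k by (rule S_meas[OF Gm])
  have e4: "0 < \<epsilon> / 4" using e by linarith
  obtain n where n: "0 < n" "(\<integral>x. \<bar>S n G x / real n - integral\<^sup>L M G\<bar> \<partial>M) < \<epsilon> / 4"
  proof -
    have "\<forall>\<^sub>F k in sequentially. (\<integral>x. \<bar>S k G x / real k - integral\<^sup>L M G\<bar> \<partial>M) < \<epsilon> / 4"
      using order_tendstoD(2)[OF birkhoff_L1[OF Gm Gb] e4] .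
    then obtain N where N: "\<forall>k\<ge>N. (\<integral>x. \<bar>S k G x / real k - integral\<^sup>L M G\<bar> \<partial>M) < \<epsilon> / 4"
      unfolding eventually_sequentially by blast
    show ?thesis by (rule that[OF zero_less_Suc N[rule_format, OF le_SucI[OF order_refl]]])
  qed
  define K where "K = real m * real n + 1"
  have "0 \<le> real m * real n" by simp
  then have K: "0 < K" unfolding K_def by linarith
  obtain L where L: "\<forall>l\<ge>L. (\<integral>x. \<bar>F l (T x) - F l x\<bar> \<partial>M) < \<epsilon> / 4 / K"
  proof -
    have "\<forall>\<^sub>F l in sequentially. (\<integral>x. \<bar>F l (T x) - F l x\<bar> \<partial>M) < \<epsilon> / 4 / K"
      by (rule order_tendstoD(2)[OF Fi], rule divide_pos_pos, use e in linarith, rule K)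
    then show ?thesis using that unfolding eventually_sequentially by blast
  qed
  show "\<exists>no. \<forall>l\<ge>no. norm ((\<integral>x. h x * F l x \<partial>M) - (\<integral>x. h x \<partial>M) * (\<integral>x. F l x \<partial>M) - 0) < \<epsilon>"
  proof (intro exI allI impI)
    fix l assume l: "l \<ge> L"
    define F' where "F' = F l"
    have F'm[measurable]: "F' \<in> borel_measurable M" unfolding F'_def by (rule Fm)
    have F'b: "\<bar>F' x\<bar> \<le> 1" if "x \<in> space M" for x unfolding F'_def by (rule Fb[OF that])
    define \<delta> where "\<delta> = (\<integral>x. \<bar>F' (T x) - F' x\<bar> \<partial>M)"
    have \<delta>: "\<delta> < \<epsilon> / 4 / K" using L l unfolding \<delta>_def F'_def by blast
    have \<delta>0: "0 \<le> \<delta>" unfolding \<delta>_def by (rule integral_nonneg_AE) simp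
    have F'i: "integrable M F'" by (rule bounded_integrable[OF F'm F'b])
    have hFi: "integrable M (\<lambda>x. h x * F' x)"
    proof (rule Bochner_Integration.integrable_bound[OF hi])
      show "(\<lambda>x. h x * F' x) \<in> borel_measurable M" by measurable
      show "AE x in M. norm (h x * F' x) \<le> norm (h x)"
      proof (rule AE_I2)
        fix x assume x: "x \<in> space M"
        have "\<bar>h x * F' x\<bar> = \<bar>h x\<bar> * \<bar>F' x\<bar>" by (rule abs_mult)
        also have "\<dots> \<le> \<bar>h x\<bar> * 1" by (rule mult_left_mono[OF F'b[OF x]]) simp
        finally show "norm (h x * F' x) \<le> norm (h x)" by simp
      qed
    qed
    have GFi: "integrable M (\<lambda>x. G x * F' x)"
      by (rule bounded_integrable[where B="real m"]) (measurable, use Gb F'b in \<open>blast intro: aux_mult\<close>)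
    have AFm: "(\<lambda>x. S n G x / real n * F' x) \<in> borel_measurable M"
      by (intro borel_measurable_times borel_measurable_divide borel_measurable_const SGm F'm)
    have AFi: "integrable M (\<lambda>x. S n G x / real n * F' x)"
      by (rule bounded_integrable[OF AFm, where B="real m"]) (rule aux_mult[OF avg_bound[OF _ Gb] F'b])
    have cFi: "integrable M (\<lambda>x. integral\<^sup>L M G * F' x)" by (rule integrable_mult_right[OF F'i])
    have Am: "(\<lambda>x. \<bar>S n G x / real n - integral\<^sup>L M G\<bar>) \<in> borel_measurable M"
      by (intro borel_measurable_abs borel_measurable_diff borel_measurable_divide borel_measurable_const SGm)
    have Ai: "integrable M (\<lambda>x. \<bar>S n G x / real n - integral\<^sup>L M G\<bar>)"
    proof (rule bounded_integrable[OF Am, where B="real m + \<bar>integral\<^sup>L M G\<bar>"])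
      fix y assume y: "y \<in> space M"
      have "\<bar>S n G y / real n\<bar> \<le> real m" by (rule avg_bound[OF y Gb])
      then show "\<bar>\<bar>S n G y / real n - integral\<^sup>L M G\<bar>\<bar> \<le> real m + \<bar>integral\<^sup>L M G\<bar>" by linarith
    qed
    have t1: "\<bar>(\<integral>x. h x * F' x \<partial>M) - (\<integral>x. G x * F' x \<partial>M)\<bar> < \<epsilon> / 4"
    proof -
      have "(\<integral>x. h x * F' x \<partial>M) - (\<integral>x. G x * F' x \<partial>M) = (\<integral>x. h x * F' x - G x * F' x \<partial>M)"
        by (rule Bochner_Integration.integral_diff[OF hFi GFi, symmetric])
      also have "\<bar>\<dots>\<bar> \<le> (\<integral>x. h x - G x \<partial>M)"
      proof (rule abs_int_le[OF hGi])
        show "(\<lambda>x. h x * F' x - G x * F' x) \<in> borel_measurable M" by measurable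
        fix x assume x: "x \<in> space M"
        have "h x * F' x - G x * F' x = (h x - G x) * F' x" by (simp add: left_diff_distrib)
        then have "\<bar>h x * F' x - G x * F' x\<bar> = \<bar>h x - G x\<bar> * \<bar>F' x\<bar>" by (simp add: abs_mult)
        also have "\<dots> \<le> \<bar>h x - G x\<bar> * 1" by (rule mult_left_mono[OF F'b[OF x]]) simp
        also have "\<dots> = h x - G x" using hG0[of x] by simp
        finally show "\<bar>h x * F' x - G x * F' x\<bar> \<le> h x - G x" .
      qed
      finally show ?thesis using hG by linarith
    qed
    have t2: "\<bar>(\<integral>x. S n G x / real n * F' x \<partial>M) - (\<integral>x. G x * F' x \<partial>M)\<bar> \<le> \<epsilon> / 4"
    proof -
      have "\<bar>(\<integral>x. S n G x / real n * F' x \<partial>M) - (\<integral>x. G x * F' x \<partial>M)\<bar> \<le> real m * real n * \<delta>"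
        unfolding \<delta>_def by (rule avg_shift[OF F'm F'b Gm Gb n(1)])
      also have "\<dots> \<le> K * \<delta>" unfolding K_def using \<delta>0 by (intro mult_right_mono) auto
      also have "\<dots> \<le> K * (\<epsilon> / 4 / K)" using \<delta> K by (intro mult_left_mono) auto
      also have "\<dots> = \<epsilon> / 4" using K by simp
      finally show ?thesis .
    qed
    have t3: "\<bar>(\<integral>x. S n G x / real n * F' x \<partial>M) - integral\<^sup>L M G * (\<integral>x. F' x \<partial>M)\<bar> < \<epsilon> / 4"
    proof -
      have "(\<integral>x. S n G x / real n * F' x \<partial>M) - integral\<^sup>L M G * (\<integral>x. F' x \<partial>M)
          = (\<integral>x. S n G x / real n * F' x \<partial>M) - (\<integral>x. integral\<^sup>L M G * F' x \<partial>M)" by simp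
      also have "\<dots> = (\<integral>x. S n G x / real n * F' x - integral\<^sup>L M G * F' x \<partial>M)"
        by (rule Bochner_Integration.integral_diff[OF AFi cFi, symmetric])
      also have "\<bar>\<dots>\<bar> \<le> (\<integral>x. \<bar>S n G x / real n - integral\<^sup>L M G\<bar> \<partial>M)"
      proof (rule abs_int_le[OF Ai])
        show "(\<lambda>x. S n G x / real n * F' x - integral\<^sup>L M G * F' x) \<in> borel_measurable M"
          by (intro borel_measurable_diff borel_measurable_times borel_measurable_divide borel_measurable_const SGm F'm)
        fix x assume x: "x \<in> space M"
        have "S n G x / real n * F' x - integral\<^sup>L M G * F' x = (S n G x / real n - integral\<^sup>L M G) * F' x"
          by (simp add: left_diff_distrib)
        then have "\<bar>S n G x / real n * F' x - integral\<^sup>L M G * F' x\<bar> = \<bar>S n G x / real n - integral\<^sup>L M G\<bar> * \<bar>F' x\<bar>"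
          by (simp only: abs_mult)
        also have "\<dots> \<le> \<bar>S n G x / real n - integral\<^sup>L M G\<bar> * 1" by (rule mult_left_mono[OF F'b[OF x]]) simp
        finally show "\<bar>S n G x / real n * F' x - integral\<^sup>L M G * F' x\<bar> \<le> \<bar>S n G x / real n - integral\<^sup>L M G\<bar>" by simp
      qed
      finally show ?thesis using n(2) by linarith
    qed
    have t4: "\<bar>integral\<^sup>L M G * (\<integral>x. F' x \<partial>M) - (\<integral>x. h x \<partial>M) * (\<integral>x. F' x \<partial>M)\<bar> \<le> \<epsilon> / 4"
    proof -
      have F1: "\<bar>\<integral>x. F' x \<partial>M\<bar> \<le> 1"
      proof -
        have "\<bar>\<integral>x. F' x \<partial>M\<bar> \<le> (\<integral>x. 1 \<partial>M)" by (rule abs_int_le[OF _ F'm F'b]) simp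
        then show ?thesis using prob_space by simp
      qed
      have "\<bar>integral\<^sup>L M G * (\<integral>x. F' x \<partial>M) - (\<integral>x. h x \<partial>M) * (\<integral>x. F' x \<partial>M)\<bar>
          = \<bar>integral\<^sup>L M G - integral\<^sup>L M h\<bar> * \<bar>\<integral>x. F' x \<partial>M\<bar>" by (simp add: abs_mult left_diff_distrib[symmetric])
      also have "\<dots> \<le> (\<epsilon> / 4) * 1" using cG F1 e4 by (intro mult_mono) auto
      finally show ?thesis by simp
    qed
    have "\<bar>(\<integral>x. h x * F' x \<partial>M) - (\<integral>x. h x \<partial>M) * (\<integral>x. F' x \<partial>M)\<bar> < \<epsilon>"
      using t1 t2 t3 t4 by linarith
    then show "norm ((\<integral>x. h x * F l x \<partial>M) - (\<integral>x. h x \<partial>M) * (\<integral>x. F l x \<partial>M) - 0) < \<epsilon>"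
      unfolding F'_def by simp
  qed
qed

end

lemma ergodic_emps:
  assumes "ergodic_pps \<mu> T"
  shows "emps \<mu> T"
proof -
  have P: "prob_space \<mu>" and Tm: "T \<in> measurable \<mu> \<mu>"
    and pres: "\<And>A. A \<in> sets \<mu> \<Longrightarrow> measure \<mu> (T -` A \<inter> space \<mu>) = measure \<mu> A"
    and erg: "\<And>A. A \<in> sets \<mu> \<Longrightarrow> T -` A \<inter> space \<mu> = A \<Longrightarrow> measure \<mu> A = 0 \<or> measure \<mu> A = 1"
    using assms unfolding ergodic_pps_def by auto
  interpret prob_space \<mu> by (rule P)
  have "distr \<mu> \<mu> T = \<mu>"
  proof (rule measure_eqI)
    show "sets (distr \<mu> \<mu> T) = sets \<mu>" by simp
    fix A assume "A \<in> sets (distr \<mu> \<mu> T)"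
    then have A: "A \<in> sets \<mu>" by simp
    have "emeasure (distr \<mu> \<mu> T) A = emeasure \<mu> (T -` A \<inter> space \<mu>)" by (rule emeasure_distr[OF Tm A])
    also have "\<dots> = ennreal (measure \<mu> (T -` A \<inter> space \<mu>))" by (rule emeasure_eq_measure)
    also have "\<dots> = ennreal (measure \<mu> A)" using pres[OF A] by simp
    also have "\<dots> = emeasure \<mu> A" by (rule emeasure_eq_measure[symmetric])
    finally show "emeasure (distr \<mu> \<mu> T) A = emeasure \<mu> A" .
  qed
  then show ?thesis
    by unfold_locales (use Tm erg in auto)
qed

lemma ac_density:
  assumes P: "prob_space \<mu>" and nu: "\<nu> \<in> probs_ac \<mu>"
  obtains h :: "'a \<Rightarrow> real" where "h \<in> borel_measurable \<mu>" "\<And>x. 0 \<le> h x" "integrable \<mu> h"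
    "(\<integral>x. h x \<partial>\<mu>) = 1" "\<nu> = density \<mu> (\<lambda>x. ennreal (h x))"
proof -
  interpret prob_space \<mu> by (rule P)
  have Pn: "prob_space \<nu>" and sn: "sets \<nu> = sets \<mu>" and ac: "absolutely_continuous \<mu> \<nu>"
    using nu unfolding probs_ac_def by auto
  interpret N: prob_space \<nu> by (rule Pn)
  define h where "h = (\<lambda>x. enn2real (RN_deriv \<mu> \<nu> x))"
  have hm[measurable]: "h \<in> borel_measurable \<mu>" unfolding h_def by measurable
  have fin: "AE x in \<mu>. RN_deriv \<mu> \<nu> x \<noteq> \<infinity>"
    by (rule RN_deriv_finite[OF _ ac sn]) (rule N.sigma_finite_measure_axioms)
  have "density \<mu> (\<lambda>x. ennreal (h x)) = density \<mu> (RN_deriv \<mu> \<nu>)"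
  proof (rule density_cong)
    show "(\<lambda>x. ennreal (h x)) \<in> borel_measurable \<mu>" by measurable
    show "RN_deriv \<mu> \<nu> \<in> borel_measurable \<mu>" by measurable
    show "AE x in \<mu>. ennreal (h x) = RN_deriv \<mu> \<nu> x"
      using fin by eventually_elim (auto simp: h_def less_top)
  qed
  also have "\<dots> = \<nu>" by (rule density_RN_deriv[OF ac sn])
  finally have dn: "\<nu> = density \<mu> (\<lambda>x. ennreal (h x))" by simp
  have h0: "\<And>x. 0 \<le> h x" unfolding h_def by simp
  have i1: "integrable \<nu> (\<lambda>x. 1::real)" by simp
  then have "integrable (density \<mu> (\<lambda>x. ennreal (h x))) (\<lambda>x. 1::real)" using dn by simp
  then have "integrable \<mu> (\<lambda>x. h x * 1)"
    by (subst (asm) integrable_real_density) (auto simp: h0)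
  then have hi: "integrable \<mu> h" by simp
  have "(\<integral>x. 1 \<partial>\<nu>) = (1::real)" using N.prob_space by simp
  then have "(\<integral>x. 1 \<partial>(density \<mu> (\<lambda>x. ennreal (h x)))) = (1::real)" using dn by simp
  then have "(\<integral>x. h x * 1 \<partial>\<mu>) = 1" by (subst (asm) integral_real_density) (auto simp: h0)
  then have h1: "(\<integral>x. h x \<partial>\<mu>) = 1" by simp
  show ?thesis by (rule that[OF hm h0 hi h1 dn])
qed

lemma tv_bound:
  fixes F :: "'a \<Rightarrow> real"
  assumes P: "prob_space \<mu>" and nu: "\<nu> \<in> probs_ac \<mu>" and nu': "\<nu>' \<in> probs_ac \<mu>"
    and Fm: "F \<in> borel_measurable \<mu>" and Fb: "\<And>x. x \<in> space \<mu> \<Longrightarrow> \<bar>F x\<bar> \<le> 1"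
  shows "\<bar>(\<integral>x. F x \<partial>\<nu>) - (\<integral>x. F x \<partial>\<nu>')\<bar> \<le> dP \<mu> \<nu> \<nu>'"
proof -
  interpret prob_space \<mu> by (rule P)
  obtain h where hm[measurable]: "h \<in> borel_measurable \<mu>" and h0: "\<And>x. 0 \<le> h x" and hi: "integrable \<mu> h"
    and h1: "(\<integral>x. h x \<partial>\<mu>) = 1" and dn: "\<nu> = density \<mu> (\<lambda>x. ennreal (h x))"
    using ac_density[OF P nu] by blast
  obtain h' where hm'[measurable]: "h' \<in> borel_measurable \<mu>" and h0': "\<And>x. 0 \<le> h' x" and hi': "integrable \<mu> h'"
    and h1': "(\<integral>x. h' x \<partial>\<mu>) = 1" and dn': "\<nu>' = density \<mu> (\<lambda>x. ennreal (h' x))"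
    using ac_density[OF P nu'] by blast
  have sn: "sets \<nu> = sets \<mu>" "sets \<nu>' = sets \<mu>" using nu nu' unfolding probs_ac_def by auto
  have Pn: "prob_space \<nu>" "prob_space \<nu>'" using nu nu' unfolding probs_ac_def by auto
  have [measurable]: "F \<in> borel_measurable \<mu>" by (rule Fm)
  have iF: "(\<integral>x. F x \<partial>\<nu>) = (\<integral>x. h x * F x \<partial>\<mu>)"
    unfolding dn by (rule integral_real_density) (auto simp: h0)
  have iF': "(\<integral>x. F x \<partial>\<nu>') = (\<integral>x. h' x * F x \<partial>\<mu>)"
    unfolding dn' by (rule integral_real_density) (auto simp: h0')
  have ihF: "integrable \<mu> (\<lambda>x. h x * F x)"
    if "integrable \<mu> h" "h \<in> borel_measurable \<mu>" for h :: "'a \<Rightarrow> real"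
  proof (rule Bochner_Integration.integrable_bound[OF that(1)])
    show "(\<lambda>x. h x * F x) \<in> borel_measurable \<mu>" using that(2) by measurable
    show "AE x in \<mu>. norm (h x * F x) \<le> norm (h x)"
    proof (rule AE_I2)
      fix x assume x: "x \<in> space \<mu>"
      have "\<bar>h x * F x\<bar> = \<bar>h x\<bar> * \<bar>F x\<bar>" by (rule abs_mult)
      also have "\<dots> \<le> \<bar>h x\<bar> * 1" by (rule mult_left_mono[OF Fb[OF x]]) simp
      finally show "norm (h x * F x) \<le> norm (h x)" by simp
    qed
  qed
  have idiff: "integrable \<mu> (\<lambda>x. h x - h' x)" by (rule Bochner_Integration.integrable_diff[OF hi hi'])
  have iabs: "integrable \<mu> (\<lambda>x. \<bar>h x - h' x\<bar>)" by (rule integrable_abs[OF idiff])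
  have step1: "\<bar>(\<integral>x. F x \<partial>\<nu>) - (\<integral>x. F x \<partial>\<nu>')\<bar> \<le> (\<integral>x. \<bar>h x - h' x\<bar> \<partial>\<mu>)"
  proof -
    have "(\<integral>x. F x \<partial>\<nu>) - (\<integral>x. F x \<partial>\<nu>') = (\<integral>x. h x * F x - h' x * F x \<partial>\<mu>)"
      unfolding iF iF' by (rule Bochner_Integration.integral_diff[OF ihF[OF hi hm] ihF[OF hi' hm'], symmetric])
    also have "\<bar>\<dots>\<bar> \<le> (\<integral>x. \<bar>h x - h' x\<bar> \<partial>\<mu>)"
    proof (rule abs_int_le[OF iabs])
      show "(\<lambda>x. h x * F x - h' x * F x) \<in> borel_measurable \<mu>" by measurable
      fix x assume x: "x \<in> space \<mu>"
      have "h x * F x - h' x * F x = (h x - h' x) * F x" by (simp add: left_diff_distrib)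
      then have "\<bar>h x * F x - h' x * F x\<bar> = \<bar>h x - h' x\<bar> * \<bar>F x\<bar>" by (simp only: abs_mult)
      also have "\<dots> \<le> \<bar>h x - h' x\<bar> * 1" by (rule mult_left_mono[OF Fb[OF x]]) simp
      finally show "\<bar>h x * F x - h' x * F x\<bar> \<le> \<bar>h x - h' x\<bar>" by simp
    qed
    finally show ?thesis .
  qed
  define A where "A = {x \<in> space \<mu>. h' x < h x}"
  have A[measurable]: "A \<in> sets \<mu>" unfolding A_def by measurable
  have iAh: "integrable \<mu> (\<lambda>x. indicator A x * (h x - h' x))"
    using integrable_real_mult_indicator[OF A idiff] by (simp add: mult.commute)
  have "(\<integral>x. \<bar>h x - h' x\<bar> \<partial>\<mu>) = (\<integral>x. 2 * (indicator A x * (h x - h' x)) - (h x - h' x) \<partial>\<mu>)"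
  proof (rule Bochner_Integration.integral_cong[OF refl])
    fix x assume "x \<in> space \<mu>"
    then show "\<bar>h x - h' x\<bar> = 2 * (indicator A x * (h x - h' x)) - (h x - h' x)"
      unfolding A_def by (auto simp: indicator_def)
  qed
  also have "\<dots> = (\<integral>x. 2 * (indicator A x * (h x - h' x)) \<partial>\<mu>) - (\<integral>x. h x - h' x \<partial>\<mu>)"
    by (rule Bochner_Integration.integral_diff[OF integrable_mult_right[OF iAh] idiff])
  also have "(\<integral>x. 2 * (indicator A x * (h x - h' x)) \<partial>\<mu>) = 2 * (\<integral>x. indicator A x * (h x - h' x) \<partial>\<mu>)"
    by (rule integral_mult_right_zero)
  also have "(\<integral>x. h x - h' x \<partial>\<mu>) = 0"
    using Bochner_Integration.integral_diff[OF hi hi'] h1 h1' by linarith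
  also have "(\<integral>x. indicator A x * (h x - h' x) \<partial>\<mu>) = measure \<nu> A - measure \<nu>' A"
  proof -
    have An: "A \<in> sets \<nu>" "A \<in> sets \<nu>'" using A sn by auto
    interpret N1: prob_space \<nu> by (rule Pn(1))
    interpret N2: prob_space \<nu>' by (rule Pn(2))
    have fn1: "emeasure \<nu> A \<noteq> \<infinity>" using N1.emeasure_finite[of A] by simp
    have fn2: "emeasure \<nu>' A \<noteq> \<infinity>" using N2.emeasure_finite[of A] by simp
    have "measure \<nu> A = (\<integral>x. indicator A x \<partial>\<nu>)" using Bochner_Integration.integral_indicator[of \<nu> A] Int_absorb2[OF sets.sets_into_space[OF An(1)]] by simp
    also have "\<dots> = (\<integral>x. h x * indicator A x \<partial>\<mu>)"
      unfolding dn by (rule integral_real_density) (auto simp: h0)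
    finally have a: "measure \<nu> A = (\<integral>x. h x * indicator A x \<partial>\<mu>)" .
    have "measure \<nu>' A = (\<integral>x. indicator A x \<partial>\<nu>')" using Bochner_Integration.integral_indicator[of \<nu>' A] Int_absorb2[OF sets.sets_into_space[OF An(2)]] by simp
    also have "\<dots> = (\<integral>x. h' x * indicator A x \<partial>\<mu>)"
      unfolding dn' by (rule integral_real_density) (auto simp: h0')
    finally have b: "measure \<nu>' A = (\<integral>x. h' x * indicator A x \<partial>\<mu>)" .
    have ia: "integrable \<mu> (\<lambda>x. h x * indicator A x)"
      by (rule integrable_real_mult_indicator[OF A hi])
    have ib: "integrable \<mu> (\<lambda>x. h' x * indicator A x)"
      by (rule integrable_real_mult_indicator[OF A hi'])
    have "(\<integral>x. indicator A x * (h x - h' x) \<partial>\<mu>) = (\<integral>x. h x * indicator A x - h' x * indicator A x \<partial>\<mu>)"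
      by (rule Bochner_Integration.integral_cong[OF refl]) (simp add: right_diff_distrib mult.commute)
    also have "\<dots> = (\<integral>x. h x * indicator A x \<partial>\<mu>) - (\<integral>x. h' x * indicator A x \<partial>\<mu>)"
      by (rule Bochner_Integration.integral_diff[OF ia ib])
    finally show ?thesis using a b by simp
  qed
  finally have eqA: "(\<integral>x. \<bar>h x - h' x\<bar> \<partial>\<mu>) = 2 * (measure \<nu> A - measure \<nu>' A)" by simp
  have bdd: "bdd_above ((\<lambda>B. \<bar>measure \<nu> B - measure \<nu>' B\<bar>) ` sets \<mu>)"
  proof (rule bdd_aboveI)
    fix y assume "y \<in> (\<lambda>B. \<bar>measure \<nu> B - measure \<nu>' B\<bar>) ` sets \<mu>"
    then obtain B where y: "y = \<bar>measure \<nu> B - measure \<nu>' B\<bar>" by blast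
    have "measure \<nu> B \<le> 1" "measure \<nu>' B \<le> 1"
      using prob_space.prob_le_1[OF Pn(1)] prob_space.prob_le_1[OF Pn(2)] by auto
    moreover have "0 \<le> measure \<nu> B" "0 \<le> measure \<nu>' B" by auto
    ultimately show "y \<le> 1" unfolding y by linarith
  qed
  have "\<bar>measure \<nu> A - measure \<nu>' A\<bar> \<le> (SUP B\<in>sets \<mu>. \<bar>measure \<nu> B - measure \<nu>' B\<bar>)"
    by (rule cSUP_upper[OF A bdd])
  then have "measure \<nu> A - measure \<nu>' A \<le> (SUP B\<in>sets \<mu>. \<bar>measure \<nu> B - measure \<nu>' B\<bar>)"
    using abs_ge_self[of "measure \<nu> A - measure \<nu>' A"] by (rule order_trans[rotated])
  then have "2 * (measure \<nu> A - measure \<nu>' A) \<le> 2 * (SUP B\<in>sets \<mu>. \<bar>measure \<nu> B - measure \<nu>' B\<bar>)"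
    by (rule mult_left_mono) simp
  then have "(\<integral>x. \<bar>h x - h' x\<bar> \<partial>\<mu>) \<le> dP \<mu> \<nu> \<nu>'" unfolding eqA dP_def .
  with step1 show ?thesis by linarith
qed

lemma compact_countable_dense:
  fixes dummy :: "'e::metric_space"
  assumes "compact (UNIV :: 'e set)"
  obtains D :: "'e set" where "countable D" "\<And>y e. 0 < e \<Longrightarrow> \<exists>d\<in>D. dist y d < e"
proof -
  have "\<forall>n::nat. \<exists>k. finite k \<and> (UNIV :: 'e set) \<subseteq> \<Union>((\<lambda>x. ball x (1 / real (Suc n))) ` k)"
    using assms unfolding compact_eq_totally_bounded by simp
  then obtain k where k: "\<And>n. finite (k n)" "\<And>n. (UNIV :: 'e set) \<subseteq> \<Union>((\<lambda>x. ball x (1 / real (Suc n))) ` k n)"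
    by metis
  define D where "D = (\<Union>n. k n)"
  have "countable D" unfolding D_def using k(1) by (simp add: countable_finite)
  moreover have "\<exists>d\<in>D. dist y d < e" if e: "0 < e" for y :: 'e and e
  proof -
    obtain n :: nat where n: "1 / real (Suc n) < e" using e by (metis nat_approx_posE)
    obtain d where d: "d \<in> k n" "y \<in> ball d (1 / real (Suc n))" using k(2)[of n] by blast
    have "dist y d < e" using d(2) n by (simp add: dist_commute)
    then show ?thesis using d(1) unfolding D_def by blast
  qed
  ultimately show ?thesis using that by blast
qed

lemma dist_set_meas:
  fixes f g :: "'a \<Rightarrow> 'e::metric_space"
  assumes cE: "compact (UNIV :: 'e set)" and fm: "f \<in> borel_measurable M" and gm: "g \<in> borel_measurable M"
  shows "{x \<in> space M. \<epsilon> < dist (f x) (g x)} \<in> sets M"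
proof -
  obtain D :: "'e set" where D: "countable D" "\<And>y e. 0 < e \<Longrightarrow> \<exists>d\<in>D. dist y d < e"
    using compact_countable_dense[OF cE] by blast
  have dm: "(\<lambda>x. dist (h x) d) \<in> borel_measurable M" if "h \<in> borel_measurable M" for h :: "'a \<Rightarrow> 'e" and d
  proof -
    have "(\<lambda>y. dist y d) \<in> borel_measurable borel"
      by (rule borel_measurable_continuous_onI) (intro continuous_intros)
    from measurable_comp[OF that this] show ?thesis by (simp add: comp_def)
  qed
  define P where "P = (\<lambda>(d, q::rat). {x \<in> space M. dist (f x) d < real_of_rat q \<and> real_of_rat q + \<epsilon> < dist (g x) d})"
  have Pm: "P p \<in> sets M" for p
  proof -
    obtain d q where p: "p = (d, q)" by (cases p)
    have [measurable]: "(\<lambda>x. dist (f x) d) \<in> borel_measurable M" "(\<lambda>x. dist (g x) d) \<in> borel_measurable M"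
      by (rule dm[OF fm]) (rule dm[OF gm])
    have "P p = {x \<in> space M. dist (f x) d < real_of_rat q \<and> real_of_rat q + \<epsilon> < dist (g x) d}"
      unfolding p P_def by simp
    also have "\<dots> \<in> sets M" by measurable
    finally show ?thesis .
  qed
  have eq: "{x \<in> space M. \<epsilon> < dist (f x) (g x)} = \<Union>(P ` (D \<times> UNIV))"
  proof (intro equalityI subsetI)
    fix x assume x: "x \<in> {x \<in> space M. \<epsilon> < dist (f x) (g x)}"
    define \<delta> where "\<delta> = (dist (f x) (g x) - \<epsilon>) / 3"
    have \<delta>: "0 < \<delta>" using x unfolding \<delta>_def by simp
    obtain d where d: "d \<in> D" "dist (f x) d < \<delta>" using D(2)[OF \<delta>] by blast
    obtain q :: rat where q: "dist (f x) d < real_of_rat q" "real_of_rat q < \<delta>" using rat_between[OF d(2)] by blast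
    have "dist (f x) (g x) \<le> dist (f x) d + dist (g x) d" by (rule dist_triangle2)
    moreover have "3 * \<delta> = dist (f x) (g x) - \<epsilon>" unfolding \<delta>_def by simp
    ultimately have "real_of_rat q + \<epsilon> < dist (g x) d" using q d(2) \<delta> by linarith
    then have "x \<in> P (d, q)" using x q unfolding P_def by simp
    then show "x \<in> \<Union>(P ` (D \<times> UNIV))" using d(1) by blast
  next
    fix x assume "x \<in> \<Union>(P ` (D \<times> UNIV))"
    then obtain d q where d: "d \<in> D" and xP: "x \<in> P (d, q)" by blast
    then have x: "x \<in> space M" "dist (f x) d < real_of_rat q" "real_of_rat q + \<epsilon> < dist (g x) d"
      unfolding P_def by auto
    have "dist (g x) d \<le> dist (g x) (f x) + dist (f x) d" by (rule dist_triangle)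
    then have "\<epsilon> < dist (f x) (g x)" using x by (simp add: dist_commute)
    then show "x \<in> {x \<in> space M. \<epsilon> < dist (f x) (g x)}" using x by simp
  qed
  have "countable (D \<times> (UNIV :: rat set))" using D(1) by simp
  then have "\<Union>(P ` (D \<times> UNIV)) \<in> sets M" by (rule sets.countable_UN'') (use Pm in auto)
  then show ?thesis unfolding eq .
qed

lemma theta_bounded:
  fixes \<theta> :: "nat \<Rightarrow> 'e::metric_space \<Rightarrow> real"
  assumes cE: "compact (UNIV :: 'e set)" and adm: "admissible_seq \<theta>"
  shows "bdd_above (range (\<lambda>y. \<bar>\<theta> j y\<bar>))"
proof -
  obtain L where L: "L-lipschitz_on UNIV (\<theta> j)" using adm unfolding admissible_seq_def by blast
  have "bounded (UNIV :: 'e set)" by (rule compact_imp_bounded[OF cE])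
  then obtain e where e: "\<And>y. dist (undefined::'e) y \<le> e" unfolding bounded_any_center[of _ undefined] by blast
  have L0: "0 \<le> L" by (rule lipschitz_on_nonneg[OF L])
  show ?thesis
  proof (rule bdd_aboveI2)
    fix y :: 'e
    have "dist (\<theta> j y) (\<theta> j undefined) \<le> L * dist y undefined" by (rule lipschitz_onD[OF L]) auto
    moreover have "L * dist y undefined \<le> L * e" using e[of y] L0 by (simp add: dist_commute mult_left_mono)
    ultimately show "\<bar>\<theta> j y\<bar> \<le> \<bar>\<theta> j undefined\<bar> + L * e" unfolding dist_real_def by linarith
  qed
qed

lemma chi_facts:
  fixes \<theta> :: "nat \<Rightarrow> 'e::metric_space \<Rightarrow> real"
  assumes cE: "compact (UNIV :: 'e set)" and adm: "admissible_seq \<theta>"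
  shows "\<bar>chi \<theta> j y\<bar> \<le> 1"
    and "\<theta> j y = (SUP y. \<bar>\<theta> j y\<bar>) * chi \<theta> j y"
    and "\<exists>Lc\<ge>0. \<forall>a b. \<bar>chi \<theta> j a - chi \<theta> j b\<bar> \<le> Lc * dist a b"
    and "continuous_on UNIV (chi \<theta> j)"
    and "continuous_on UNIV (\<theta> j)"
proof -
  define Sj where "Sj = (SUP y. \<bar>\<theta> j y\<bar>)"
  have le: "\<bar>\<theta> j z\<bar> \<le> Sj" for z unfolding Sj_def by (rule cSUP_upper[OF _ theta_bounded[OF cE adm]]) simp
  have S0: "0 \<le> Sj" using le[of undefined] by linarith
  have cd: "chi \<theta> j z = \<theta> j z / Sj" for z unfolding chi_def Sj_def ..
  show "\<bar>chi \<theta> j y\<bar> \<le> 1"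
  proof (cases "Sj = 0")
    case True then show ?thesis by (simp add: cd)
  next
    case False
    then have "0 < Sj" using S0 by simp
    then show ?thesis using le[of y] by (simp add: cd abs_divide divide_le_eq)
  qed
  show "\<theta> j y = (SUP y. \<bar>\<theta> j y\<bar>) * chi \<theta> j y"
  proof (cases "Sj = 0")
    case True then show ?thesis using le[of y] by (simp add: cd Sj_def[symmetric])
  next
    case False then show ?thesis by (simp add: cd Sj_def[symmetric])
  qed
  obtain L where L: "L-lipschitz_on UNIV (\<theta> j)" using adm unfolding admissible_seq_def by blast
  have L0: "0 \<le> L" by (rule lipschitz_on_nonneg[OF L])
  have lipc: "\<bar>chi \<theta> j a - chi \<theta> j b\<bar> \<le> (L / Sj) * dist a b" for a b
  proof -
    have d: "\<bar>\<theta> j a - \<theta> j b\<bar> \<le> L * dist a b" using lipschitz_onD[OF L, of a b] by (simp add: dist_real_def)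
    have "\<bar>chi \<theta> j a - chi \<theta> j b\<bar> = \<bar>\<theta> j a - \<theta> j b\<bar> / Sj" by (simp add: cd diff_divide_distrib[symmetric] abs_divide S0)
    also have "\<dots> \<le> (L * dist a b) / Sj" by (rule divide_right_mono[OF d S0])
    finally show ?thesis by simp
  qed
  have LS0: "0 \<le> L / Sj" using L0 S0 by simp
  show "\<exists>Lc\<ge>0. \<forall>a b. \<bar>chi \<theta> j a - chi \<theta> j b\<bar> \<le> Lc * dist a b" using lipc LS0 by blast
  have "(L / Sj)-lipschitz_on UNIV (chi \<theta> j)"
    by (rule lipschitz_onI) (use lipc LS0 in \<open>auto simp: dist_real_def\<close>)
  then show "continuous_on UNIV (chi \<theta> j)" by (rule lipschitz_on_continuous_on)
  show "continuous_on UNIV (\<theta> j)" by (rule lipschitz_on_continuous_on[OF L])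
qed

context emps
begin

lemma shift_L1:
  fixes R :: "nat \<Rightarrow> 'a \<Rightarrow> 'e::metric_space" and c :: "'e \<Rightarrow> real"
  assumes cE: "compact (UNIV :: 'e set)" and Rm: "\<And>l. R l \<in> borel_measurable M"
    and Rinv: "asympt_inv_in_measure M T R"
    and cl: "\<And>a b. \<bar>c a - c b\<bar> \<le> Lc * dist a b" and Lc: "0 \<le> Lc"
    and cb: "\<And>y. \<bar>c y\<bar> \<le> 1" and cm: "c \<in> borel_measurable borel"
  shows "(\<lambda>l. \<integral>x. \<bar>c (R l (T x)) - c (R l x)\<bar> \<partial>M) \<longlonglongrightarrow> 0"
proof (rule LIMSEQ_I)
  fix r :: real assume r: "0 < r"
  define \<eta> where "\<eta> = r / (2 * (Lc + 1))"
  have \<eta>: "0 < \<eta>" unfolding \<eta>_def using r Lc by simp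
  have Lc\<eta>: "Lc * \<eta> \<le> r / 2"
  proof -
    have "Lc * \<eta> = r / 2 * (Lc / (Lc + 1))" unfolding \<eta>_def by (simp add: field_simps)
    also have "\<dots> \<le> r / 2 * 1" using r Lc by (intro mult_left_mono) auto
    finally show ?thesis by simp
  qed
  define Z where "Z = (\<lambda>l. {x \<in> space M. \<eta> < dist (R l (T x)) (R l x)})"
  have RTm: "(\<lambda>x. R l (T x)) \<in> borel_measurable M" for l
    using measurable_comp[OF T_meas Rm[of l]] by (simp add: comp_def)
  have Zs: "Z l \<in> sets M" for l unfolding Z_def by (rule dist_set_meas[OF cE RTm Rm])
  have "(\<lambda>l. measure M (Z l)) \<longlonglongrightarrow> 0" using Rinv \<eta> unfolding asympt_inv_in_measure_def Z_def by blast
  from order_tendstoD(2)[OF this, of "r / 4"] r obtain N where N: "\<forall>l\<ge>N. measure M (Z l) < r / 4"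
    unfolding eventually_sequentially by auto
  show "\<exists>no. \<forall>l\<ge>no. norm ((\<integral>x. \<bar>c (R l (T x)) - c (R l x)\<bar> \<partial>M) - 0) < r"
  proof (intro exI allI impI)
    fix l assume l: "l \<ge> N"
    have cRm: "(\<lambda>x. \<bar>c (R l (T x)) - c (R l x)\<bar>) \<in> borel_measurable M"
      using measurable_comp[OF RTm[of l] cm] measurable_comp[OF Rm[of l] cm]
      by (intro borel_measurable_abs borel_measurable_diff) (simp_all add: comp_def)
    have i1: "integrable M (\<lambda>x. \<bar>c (R l (T x)) - c (R l x)\<bar>)"
      by (rule bounded_integrable[OF cRm, where B=2]) (use cb in \<open>blast intro: aux_diff2\<close>)
    have i2: "integrable M (\<lambda>x. Lc * \<eta> + 2 * indicator (Z l) x)"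
      by (intro Bochner_Integration.integrable_add integrable_mult_right integrable_const
          integrable_real_indicator Zs) (simp_all add: less_top[symmetric])
    have "(\<integral>x. \<bar>c (R l (T x)) - c (R l x)\<bar> \<partial>M) \<le> (\<integral>x. Lc * \<eta> + 2 * indicator (Z l) x \<partial>M)"
    proof (rule integral_mono[OF i1 i2])
      fix x assume x: "x \<in> space M"
      show "\<bar>c (R l (T x)) - c (R l x)\<bar> \<le> Lc * \<eta> + 2 * indicator (Z l) x"
      proof (cases "x \<in> Z l")
        case True
        have "\<bar>c (R l (T x)) - c (R l x)\<bar> \<le> 2" using cb[of "R l (T x)"] cb[of "R l x"] by linarith
        moreover have "0 \<le> Lc * \<eta>" using Lc \<eta> by simp
        ultimately show ?thesis using True by simp
      next
        case False
        then have "dist (R l (T x)) (R l x) \<le> \<eta>" using x unfolding Z_def by auto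
        then have "Lc * dist (R l (T x)) (R l x) \<le> Lc * \<eta>" using Lc by (intro mult_left_mono)
        then show ?thesis using cl[of "R l (T x)" "R l x"] False by simp
      qed
    qed
    also have "(\<integral>x. Lc * \<eta> + 2 * indicator (Z l) x \<partial>M) = Lc * \<eta> + 2 * measure M (Z l)"
    proof -
      have "(\<integral>x. Lc * \<eta> + 2 * indicator (Z l) x \<partial>M) = (\<integral>x. Lc * \<eta> \<partial>M) + (\<integral>x. 2 * indicator (Z l) x \<partial>M)"
        by (rule Bochner_Integration.integral_add) (auto intro!: integrable_real_indicator Zs simp: less_top[symmetric])
      also have "(\<integral>x. Lc * \<eta> \<partial>M) = Lc * \<eta>" using prob_space by simp
      also have "(\<integral>x. 2 * indicator (Z l) x \<partial>M) = 2 * measure M (Z l)"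
        using Bochner_Integration.integral_indicator[of M "Z l"] Int_absorb2[OF sets.sets_into_space[OF Zs]] by simp
      finally show ?thesis .
    qed
    also have "\<dots> < r" using Lc\<eta> N l by auto
    finally have "(\<integral>x. \<bar>c (R l (T x)) - c (R l x)\<bar> \<partial>M) < r" .
    moreover have "0 \<le> (\<integral>x. \<bar>c (R l (T x)) - c (R l x)\<bar> \<partial>M)" by (rule integral_nonneg_AE) simp
    ultimately show "norm ((\<integral>x. \<bar>c (R l (T x)) - c (R l x)\<bar> \<partial>M) - 0) < r" by simp
  qed
qed

end

definition wt :: "nat \<Rightarrow> real" where "wt j = (1/2) ^ (j + 2)"

lemma wt_pos: "0 < wt j" unfolding wt_def by simp

lemma wt_sums: "wt sums (1/2)"
proof -
  have "(\<lambda>j. (1/2::real) ^ j) sums (1 / (1 - 1/2))" by (rule geometric_sums) simp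
  then have "(\<lambda>j. (1/4) * (1/2::real) ^ j) sums ((1/4) * (1 / (1 - 1/2)))" by (rule sums_mult)
  moreover have "(\<lambda>j. (1/4) * (1/2::real) ^ j) = wt" unfolding wt_def by (auto simp: power_add)
  ultimately show ?thesis by simp
qed

lemma wt_summable: "summable (\<lambda>j. wt j * x j)" if "\<And>j. \<bar>x j\<bar> \<le> C" for x :: "nat \<Rightarrow> real"
proof (rule summable_comparison_test'[where N=0])
  show "summable (\<lambda>j. wt j * C)" using wt_sums by (intro summable_mult2) (simp add: sums_summable)
  fix j :: nat
  show "norm (wt j * x j) \<le> wt j * C" using that[of j] wt_pos[of j] by (simp add: abs_mult)
qed

lemma wt_const: "(\<Sum>j. wt j * C) = C / 2"
proof -
  have "(\<lambda>j. wt j * C) sums (1/2 * C)" by (rule sums_mult2[OF wt_sums])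
  then show ?thesis by (simp add: sums_iff)
qed

lemma wt_mono:
  fixes x y :: "nat \<Rightarrow> real"
  assumes "\<And>j. x j \<le> y j" "\<And>j. \<bar>x j\<bar> \<le> C" "\<And>j. \<bar>y j\<bar> \<le> C'"
  shows "(\<Sum>j. wt j * x j) \<le> (\<Sum>j. wt j * y j)"
  by (rule suminf_le) (use assms wt_pos in \<open>auto intro: mult_left_mono less_imp_le wt_summable\<close>)

lemma wt_add:
  fixes x y :: "nat \<Rightarrow> real"
  assumes "\<And>j. \<bar>x j\<bar> \<le> C" "\<And>j. \<bar>y j\<bar> \<le> C'"
  shows "(\<Sum>j. wt j * (x j + y j)) = (\<Sum>j. wt j * x j) + (\<Sum>j. wt j * y j)"
proof -
  have "(\<Sum>j. wt j * x j) + (\<Sum>j. wt j * y j) = (\<Sum>j. wt j * x j + wt j * y j)"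
    by (rule suminf_add) (use assms in \<open>auto intro: wt_summable\<close>)
  then show ?thesis by (simp add: distrib_left)
qed

lemma wt_term:
  fixes x :: "nat \<Rightarrow> real"
  assumes "\<And>j. 0 \<le> x j" "\<And>j. \<bar>x j\<bar> \<le> C"
  shows "wt j * x j \<le> (\<Sum>j. wt j * x j)"
proof -
  have "sum (\<lambda>j. wt j * x j) {j} \<le> (\<Sum>j. wt j * x j)"
  proof (rule sum_le_suminf)
    show "summable (\<lambda>j. wt j * x j)" by (rule wt_summable[OF assms(2)])
    show "0 \<le> wt n * x n" for n using wt_pos[of n] assms(1)[of n] by simp
  qed simp
  then show ?thesis by simp
qed

lemma wt_tannery:
  fixes x :: "nat \<Rightarrow> nat \<Rightarrow> real"
  assumes lim: "\<And>j. (\<lambda>l. x l j) \<longlonglongrightarrow> 0" and b: "\<And>l j. \<bar>x l j\<bar> \<le> C"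
  shows "(\<lambda>l. \<Sum>j. wt j * x l j) \<longlonglongrightarrow> 0"
proof -
  let ?a = "\<lambda>j l. wt j * x l j"
  have lim': "\<And>j. ((\<lambda>l. ?a j l) \<longlongrightarrow> 0) sequentially"
    using tendsto_mult[OF tendsto_const lim] by simp
  have bd: "\<forall>\<^sub>F (j, l) in at_top \<times>\<^sub>F sequentially. norm (?a j l) \<le> wt j * C"
  proof (rule always_eventually, clarify)
    fix j l
    show "norm (wt j * x l j) \<le> wt j * C" using b[of l j] wt_pos[of j] by (simp add: abs_mult)
  qed
  have sm: "summable (\<lambda>j. wt j * C)" using wt_sums by (intro summable_mult2) (simp add: sums_summable)
  have "((\<lambda>l. suminf (\<lambda>j. ?a j l)) \<longlongrightarrow> suminf (\<lambda>j. 0::real)) sequentially"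
    using tannerys_theorem[of ?a "\<lambda>j. 0" sequentially "\<lambda>j. wt j * C", OF lim' bd sm] by simp
  then show ?thesis by simp
qed

lemma four: "\<bar>A - X\<bar> \<le> e \<Longrightarrow> \<bar>C - Y\<bar> \<le> e \<Longrightarrow> \<bar>X - Y\<bar> < e \<Longrightarrow> \<bar>C - D\<bar> < e \<Longrightarrow> \<bar>A - D\<bar> < 4 * (e::real)"
  by (simp add: abs_if split: if_splits)

lemma law_prob:
  fixes R :: "'a \<Rightarrow> 'e::topological_space"
  assumes "prob_space \<nu>" "R \<in> borel_measurable \<nu>"
  shows "prob_space (law \<nu> R)" "sets (law \<nu> R) = sets borel"
  unfolding law_def using prob_space.prob_space_distr[OF assms] by auto

lemma int_close:
  fixes f g :: "'e::metric_space \<Rightarrow> real"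
  assumes Q: "prob_space Q" "sets Q = sets borel"
    and cf: "continuous_on UNIV f" and cg: "continuous_on UNIV g"
    and bf: "\<And>y. \<bar>f y\<bar> \<le> B" and bg: "\<And>y. \<bar>g y\<bar> \<le> B'"
    and fg: "\<And>y. \<bar>f y - g y\<bar> \<le> e"
  shows "\<bar>(\<integral>y. f y \<partial>Q) - (\<integral>y. g y \<partial>Q)\<bar> \<le> e"
proof -
  interpret prob_space Q by (rule Q(1))
  have fm: "f \<in> borel_measurable Q"
    by (subst measurable_cong_sets[OF Q(2) refl]) (rule borel_measurable_continuous_onI[OF cf])
  have gm: "g \<in> borel_measurable Q"
    by (subst measurable_cong_sets[OF Q(2) refl]) (rule borel_measurable_continuous_onI[OF cg])
  have fi: "integrable Q f" by (rule integrable_const_bound[where B=B]) (use bf fm in auto)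
  have gi: "integrable Q g" by (rule integrable_const_bound[where B=B']) (use bg gm in auto)
  have "(\<integral>y. f y \<partial>Q) - (\<integral>y. g y \<partial>Q) = (\<integral>y. f y - g y \<partial>Q)"
    by (rule Bochner_Integration.integral_diff[OF fi gi, symmetric])
  also have "\<bar>\<dots>\<bar> \<le> (\<integral>y. e \<partial>Q)"
    by (rule abs_int_le) (use fg fm gm in auto)
  also have "\<dots> = e" using prob_space by simp
  finally show ?thesis .
qed

lemma int_bound1:
  fixes f :: "'a \<Rightarrow> real"
  assumes Q: "prob_space Q" and fm: "f \<in> borel_measurable Q" and b: "\<And>y. \<bar>f y\<bar> \<le> 1"
  shows "\<bar>integral\<^sup>L Q f\<bar> \<le> 1"
proof -
  interpret prob_space Q by (rule Q)
  have "\<bar>integral\<^sup>L Q f\<bar> \<le> (\<integral>y. 1 \<partial>Q)" by (rule abs_int_le[OF _ fm b]) simp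
  then show ?thesis using prob_space by simp
qed

theorem mainTheorem10:
  fixes \<mu> :: "'a measure" and T :: "'a \<Rightarrow> 'a"
    and R :: "nat \<Rightarrow> 'a \<Rightarrow> 'e::metric_space"
    and \<theta> :: "nat \<Rightarrow> 'e \<Rightarrow> real"
    and K :: "'a measure set"
  assumes erg: "ergodic_pps \<mu> T"
    and compE: "compact (UNIV :: 'e set)"
    and Rmeas: "\<And>l. R l \<in> borel_measurable \<mu>"
    and Rinv: "asympt_inv_in_measure \<mu> T R"
    and Kcomp: "dP_compact \<mu> K"
    and adm: "admissible_seq \<theta>"
  shows "(\<forall>\<epsilon>>0. \<forall>\<^sub>F l in sequentially.
            \<forall>\<nu>\<in>K. \<forall>\<nu>'\<in>K. DE \<theta> (law \<nu> (R l)) (law \<nu>' (R l)) < \<epsilon>)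
    \<and> (\<forall>(P :: 'w measure) (Rr :: 'w \<Rightarrow> 'e) (\<nu>s :: nat \<Rightarrow> 'a measure) \<nu>bs.
          prob_space P \<longrightarrow> Rr \<in> borel_measurable P \<longrightarrow>
          (\<forall>l. \<nu>s l \<in> K) \<longrightarrow> (\<forall>l. \<nu>bs l \<in> K) \<longrightarrow>
          weak_conv_law (\<lambda>l. law (\<nu>bs l) (R l)) (law P Rr) \<longrightarrow>
          weak_conv_law (\<lambda>l. law (\<nu>s l) (R l)) (law P Rr))"
proof -
  interpret E: emps \<mu> T by (rule ergodic_emps[OF erg])
  have P\<mu>: "prob_space \<mu>" by (rule E.prob_space_axioms)
  have KP: "K \<subseteq> probs_ac \<mu>" using Kcomp unfolding dP_compact_def by blast
  have cb: "\<And>j y. \<bar>chi \<theta> j y\<bar> \<le> 1" by (rule chi_facts(1)[OF compE adm])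
  have cc: "\<And>j. continuous_on UNIV (chi \<theta> j)" by (rule chi_facts(4)[OF compE adm])
  have cm: "\<And>j. chi \<theta> j \<in> borel_measurable borel" by (rule borel_measurable_continuous_onI[OF cc])
  define a where "a = (\<lambda>\<nu> l j. (\<integral>y. chi \<theta> j y \<partial>(law \<nu> (R l))))"
  define Dd where "Dd = (\<lambda>\<nu> \<nu>' l. DE \<theta> (law \<nu> (R l)) (law \<nu>' (R l)))"
  have Dd_eq: "Dd \<nu> \<nu>' l = (\<Sum>j. wt j * \<bar>a \<nu> l j - a \<nu>' l j\<bar>)" for \<nu> \<nu>' l
    unfolding Dd_def DE_def a_def wt_def ..
  have Rnu: "R l \<in> borel_measurable \<nu>" if "sets \<nu> = sets \<mu>" for \<nu> :: "'a measure" and l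
    by (subst measurable_cong_sets[OF that refl]) (rule Rmeas)
  have a_int: "a \<nu> l j = (\<integral>x. chi \<theta> j (R l x) \<partial>\<nu>)" if "sets \<nu> = sets \<mu>" for \<nu> :: "'a measure" and l j
    unfolding a_def law_def by (rule integral_distr[OF Rnu[OF that] cm])
  have a_bd: "\<bar>a \<nu> l j\<bar> \<le> 1" if "prob_space \<nu>" "sets \<nu> = sets \<mu>" for \<nu> :: "'a measure" and l j
    unfolding a_def by (rule int_bound1[OF law_prob(1)[OF that(1) Rnu[OF that(2)]]]) 
      (simp_all add: measurable_cong_sets[OF law_prob(2)[OF that(1) Rnu[OF that(2)]] refl] cm cb)
  have ac_facts: "prob_space \<nu>" "sets \<nu> = sets \<mu>" if "\<nu> \<in> probs_ac \<mu>" for \<nu>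
    using that unfolding probs_ac_def by auto
  have mu_facts: "prob_space \<mu>" "sets \<mu> = sets \<mu>" by (rule P\<mu>) (rule refl)
  have d_bd: "\<bar>\<bar>a \<nu> l j - a \<nu>' l j\<bar>\<bar> \<le> 2"
    if "prob_space \<nu>" "sets \<nu> = sets \<mu>" "prob_space \<nu>'" "sets \<nu>' = sets \<mu>" for \<nu> \<nu>' :: "'a measure" and l j
    using a_bd[OF that(1,2), of l j] a_bd[OF that(3,4), of l j] by linarith
  have Dd0: "0 \<le> Dd \<nu> \<nu>' l"
    if "prob_space \<nu>" "sets \<nu> = sets \<mu>" "prob_space \<nu>'" "sets \<nu>' = sets \<mu>" for \<nu> \<nu>' :: "'a measure" and l
    unfolding Dd_eq
  proof (rule suminf_nonneg)
    show "summable (\<lambda>j. wt j * \<bar>a \<nu> l j - a \<nu>' l j\<bar>)" by (rule wt_summable[OF d_bd[OF that]])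
    show "0 \<le> wt j * \<bar>a \<nu> l j - a \<nu>' l j\<bar>" for j using wt_pos[of j] by simp
  qed
  have A2: "\<bar>a \<nu> l j - a \<nu>' l j\<bar> \<le> dP \<mu> \<nu> \<nu>'" if "\<nu> \<in> probs_ac \<mu>" "\<nu>' \<in> probs_ac \<mu>" for \<nu> \<nu>' l j
  proof -
    have Fm: "(\<lambda>x. chi \<theta> j (R l x)) \<in> borel_measurable \<mu>"
      using measurable_comp[OF Rmeas[of l] cm[of j]] by (simp add: comp_def)
    show ?thesis unfolding a_int[OF ac_facts(2)[OF that(1)]] a_int[OF ac_facts(2)[OF that(2)]]
      by (rule tv_bound[OF P\<mu> that Fm cb])
  qed
  have A3: "(\<lambda>l. a \<nu> l j - a \<mu> l j) \<longlonglongrightarrow> 0" if nu: "\<nu> \<in> probs_ac \<mu>" for \<nu> j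
  proof -
    obtain h where hm: "h \<in> borel_measurable \<mu>" and h0: "\<And>x. 0 \<le> h x" and hi: "integrable \<mu> h"
      and h1: "(\<integral>x. h x \<partial>\<mu>) = 1" and dn: "\<nu> = density \<mu> (\<lambda>x. ennreal (h x))"
      using ac_density[OF P\<mu> nu] by blast
    have Fm: "\<And>l. (\<lambda>x. chi \<theta> j (R l x)) \<in> borel_measurable \<mu>"
      using measurable_comp[OF Rmeas cm[of j]] by (simp add: comp_def)
    obtain Lc where Lc: "0 \<le> Lc" "\<And>a b. \<bar>chi \<theta> j a - chi \<theta> j b\<bar> \<le> Lc * dist a b"
      using chi_facts(3)[OF compE adm, of j] by blast
    have Fi: "(\<lambda>l. \<integral>x. \<bar>chi \<theta> j (R l (T x)) - chi \<theta> j (R l x)\<bar> \<partial>\<mu>) \<longlonglongrightarrow> 0"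
      by (rule E.shift_L1[OF compE Rmeas Rinv Lc(2) Lc(1) cb cm])
    have mix: "(\<lambda>l. (\<integral>x. h x * chi \<theta> j (R l x) \<partial>\<mu>) - (\<integral>x. h x \<partial>\<mu>) * (\<integral>x. chi \<theta> j (R l x) \<partial>\<mu>)) \<longlonglongrightarrow> 0"
      by (rule E.density_mixing[OF hm _ hi Fm _ Fi]) (simp_all add: h0 cb)
    have "a \<nu> l j = (\<integral>x. h x * chi \<theta> j (R l x) \<partial>\<mu>)" for l
    proof -
      have "a \<nu> l j = (\<integral>x. chi \<theta> j (R l x) \<partial>\<nu>)" by (rule a_int[OF ac_facts(2)[OF nu]])
      also have "\<dots> = (\<integral>x. chi \<theta> j (R l x) \<partial>(density \<mu> (\<lambda>x. ennreal (h x))))" using dn by simp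
      also have "\<dots> = (\<integral>x. h x * chi \<theta> j (R l x) \<partial>\<mu>)"
        by (rule integral_real_density[OF hm _ Fm]) (simp add: h0)
      finally show ?thesis .
    qed
    moreover have "a \<mu> l j = (\<integral>x. chi \<theta> j (R l x) \<partial>\<mu>)" for l by (rule a_int[OF refl])
    ultimately show ?thesis using mix unfolding h1 by simp
  qed
  have P1: "Dd \<nu> \<nu>' l \<le> Dd \<nu> \<mu> l + Dd \<nu>' \<mu> l" if "\<nu> \<in> probs_ac \<mu>" "\<nu>' \<in> probs_ac \<mu>" for \<nu> \<nu>' l
  proof -
    note f1 = ac_facts[OF that(1)] and f2 = ac_facts[OF that(2)]
    have "Dd \<nu> \<nu>' l \<le> (\<Sum>j. wt j * (\<bar>a \<nu> l j - a \<mu> l j\<bar> + \<bar>a \<nu>' l j - a \<mu> l j\<bar>))"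
      unfolding Dd_eq
    proof (rule wt_mono)
      show "\<bar>a \<nu> l j - a \<nu>' l j\<bar> \<le> \<bar>a \<nu> l j - a \<mu> l j\<bar> + \<bar>a \<nu>' l j - a \<mu> l j\<bar>" for j by linarith
      show "\<bar>\<bar>a \<nu> l j - a \<nu>' l j\<bar>\<bar> \<le> 2" for j by (rule d_bd[OF f1 f2])
      show "\<bar>\<bar>a \<nu> l j - a \<mu> l j\<bar> + \<bar>a \<nu>' l j - a \<mu> l j\<bar>\<bar> \<le> 4" for j
        using d_bd[OF f1 mu_facts, of l j] d_bd[OF f2 mu_facts, of l j] by linarith
    qed
    also have "\<dots> = Dd \<nu> \<mu> l + Dd \<nu>' \<mu> l"
      unfolding Dd_eq by (rule wt_add) (rule d_bd[OF f1 mu_facts], rule d_bd[OF f2 mu_facts])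
    finally show ?thesis .
  qed
  have P2: "Dd \<nu> \<mu> l \<le> Dd \<nu>' \<mu> l + dP \<mu> \<nu> \<nu>' / 2" if "\<nu> \<in> probs_ac \<mu>" "\<nu>' \<in> probs_ac \<mu>" for \<nu> \<nu>' l
  proof -
    note f1 = ac_facts[OF that(1)] and f2 = ac_facts[OF that(2)]
    have "Dd \<nu> \<mu> l \<le> (\<Sum>j. wt j * (\<bar>a \<nu>' l j - a \<mu> l j\<bar> + dP \<mu> \<nu> \<nu>'))"
      unfolding Dd_eq
    proof (rule wt_mono)
      show "\<bar>a \<nu> l j - a \<mu> l j\<bar> \<le> \<bar>a \<nu>' l j - a \<mu> l j\<bar> + dP \<mu> \<nu> \<nu>'" for j
        using A2[OF that, of l j] by linarith
      show "\<bar>\<bar>a \<nu> l j - a \<mu> l j\<bar>\<bar> \<le> 2" for j by (rule d_bd[OF f1 mu_facts])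
      show "\<bar>\<bar>a \<nu>' l j - a \<mu> l j\<bar> + dP \<mu> \<nu> \<nu>'\<bar> \<le> 2 + \<bar>dP \<mu> \<nu> \<nu>'\<bar>" for j
        using d_bd[OF f2 mu_facts, of l j] by linarith
    qed
    also have "\<dots> = Dd \<nu>' \<mu> l + (\<Sum>j. wt j * dP \<mu> \<nu> \<nu>')"
      unfolding Dd_eq by (rule wt_add) (rule d_bd[OF f2 mu_facts], rule order_refl)
    also have "(\<Sum>j. wt j * dP \<mu> \<nu> \<nu>') = dP \<mu> \<nu> \<nu>' / 2" by (rule wt_const)
    finally show ?thesis .
  qed
  have P3: "(\<lambda>l. Dd \<nu> \<mu> l) \<longlonglongrightarrow> 0" if nu: "\<nu> \<in> probs_ac \<mu>" for \<nu>
    unfolding Dd_eq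
  proof (rule wt_tannery)
    show "(\<lambda>l. \<bar>a \<nu> l j - a \<mu> l j\<bar>) \<longlonglongrightarrow> 0" for j by (rule tendsto_rabs_zero[OF A3[OF nu]])
    show "\<bar>\<bar>a \<nu> l j - a \<mu> l j\<bar>\<bar> \<le> 2" for l j by (rule d_bd[OF ac_facts[OF nu] mu_facts])
  qed
  have P4: "(\<lambda>l. Dd (\<nu>s l) \<mu> l) \<longlonglongrightarrow> 0" if Ks: "\<And>l. \<nu>s l \<in> K" for \<nu>s
  proof (rule ccontr)
    assume nc: "\<not> (\<lambda>l. Dd (\<nu>s l) \<mu> l) \<longlonglongrightarrow> 0"
    have nn: "0 \<le> Dd (\<nu>s l) \<mu> l" for l using Dd0[OF ac_facts[OF subsetD[OF KP Ks]] mu_facts] .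
    obtain \<epsilon> where e: "0 < \<epsilon>" and fr: "\<forall>N. \<exists>l\<ge>N. \<epsilon> \<le> Dd (\<nu>s l) \<mu> l"
    proof -
      have "\<not> (\<forall>r>0. \<exists>no. \<forall>n\<ge>no. norm (Dd (\<nu>s n) \<mu> n - 0) < r)" using nc unfolding LIMSEQ_iff .
      then obtain r where "0 < r" "\<forall>no. \<exists>n\<ge>no. \<not> norm (Dd (\<nu>s n) \<mu> n - 0) < r" by blast
      moreover have "\<not> norm (Dd (\<nu>s n) \<mu> n - 0) < r \<longleftrightarrow> r \<le> Dd (\<nu>s n) \<mu> n" for n using nn[of n] by auto
      ultimately show ?thesis using that by auto
    qed
    have "infinite {l. \<epsilon> \<le> Dd (\<nu>s l) \<mu> l}" unfolding infinite_nat_iff_unbounded_le using fr by auto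
    then obtain \<sigma> :: "nat \<Rightarrow> nat" where \<sigma>: "strict_mono \<sigma>" "\<And>n. \<epsilon> \<le> Dd (\<nu>s (\<sigma> n)) \<mu> (\<sigma> n)"
      using infinite_enumerate by blast
    have "\<forall>s::nat \<Rightarrow> 'a measure. (\<forall>n. s n \<in> K) \<longrightarrow> (\<exists>r \<nu>. strict_mono r \<and> \<nu> \<in> K \<and> (\<lambda>n. dP \<mu> (s (r n)) \<nu>) \<longlonglongrightarrow> 0)"
      using Kcomp unfolding dP_compact_def by blast
    from this[rule_format, of "\<lambda>n. \<nu>s (\<sigma> n)"] Ks obtain r \<nu> where
      r: "strict_mono r" "\<nu> \<in> K" "(\<lambda>n. dP \<mu> (\<nu>s (\<sigma> (r n))) \<nu>) \<longlonglongrightarrow> 0" by blast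
    have sm: "strict_mono (\<sigma> \<circ> r)" using \<sigma>(1) r(1) by (rule strict_mono_o)
    have "((\<lambda>l. Dd \<nu> \<mu> l) \<circ> (\<sigma> \<circ> r)) \<longlonglongrightarrow> 0"
      by (rule LIMSEQ_subseq_LIMSEQ[OF P3[OF subsetD[OF KP r(2)]] sm])
    then have "(\<lambda>n. Dd \<nu> \<mu> (\<sigma> (r n)) + dP \<mu> (\<nu>s (\<sigma> (r n))) \<nu> / 2) \<longlonglongrightarrow> 0 + 0 / 2"
      by (intro tendsto_add tendsto_divide r(3) tendsto_const) (simp_all add: comp_def)
    then have "\<forall>\<^sub>F n in sequentially. Dd \<nu> \<mu> (\<sigma> (r n)) + dP \<mu> (\<nu>s (\<sigma> (r n))) \<nu> / 2 < \<epsilon>"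
      using e by (intro order_tendstoD(2)) simp_all
    then obtain n where n: "Dd \<nu> \<mu> (\<sigma> (r n)) + dP \<mu> (\<nu>s (\<sigma> (r n))) \<nu> / 2 < \<epsilon>"
      unfolding eventually_sequentially by blast
    have "Dd (\<nu>s (\<sigma> (r n))) \<mu> (\<sigma> (r n)) \<le> Dd \<nu> \<mu> (\<sigma> (r n)) + dP \<mu> (\<nu>s (\<sigma> (r n))) \<nu> / 2"
      by (rule P2[OF subsetD[OF KP Ks] subsetD[OF KP r(2)]])
    with n \<sigma>(2)[of "r n"] show False by linarith
  qed
  have P5: "\<forall>\<^sub>F l in sequentially. \<forall>\<nu>\<in>K. Dd \<nu> \<mu> l < \<epsilon>" if e: "0 < \<epsilon>" for \<epsilon>
  proof (rule ccontr)
    assume "\<not> (\<forall>\<^sub>F l in sequentially. \<forall>\<nu>\<in>K. Dd \<nu> \<mu> l < \<epsilon>)"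
    then have fr: "\<forall>N. \<exists>l\<ge>N. \<exists>\<nu>\<in>K. \<epsilon> \<le> Dd \<nu> \<mu> l"
      unfolding eventually_sequentially by (auto simp: not_less)
    then obtain \<nu>0 where \<nu>0: "\<nu>0 \<in> K" by blast
    define \<nu>s where "\<nu>s = (\<lambda>l. if \<exists>\<nu>\<in>K. \<epsilon> \<le> Dd \<nu> \<mu> l then SOME \<nu>. \<nu> \<in> K \<and> \<epsilon> \<le> Dd \<nu> \<mu> l else \<nu>0)"
    have Ks: "\<nu>s l \<in> K" for l
    proof (cases "\<exists>\<nu>\<in>K. \<epsilon> \<le> Dd \<nu> \<mu> l")
      case True
      then have "\<exists>\<nu>. \<nu> \<in> K \<and> \<epsilon> \<le> Dd \<nu> \<mu> l" by blast
      from someI_ex[OF this] show ?thesis using True unfolding \<nu>s_def by simp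
    qed (simp add: \<nu>s_def \<nu>0)
    have big: "\<epsilon> \<le> Dd (\<nu>s l) \<mu> l" if "\<exists>\<nu>\<in>K. \<epsilon> \<le> Dd \<nu> \<mu> l" for l
    proof -
      have "\<exists>\<nu>. \<nu> \<in> K \<and> \<epsilon> \<le> Dd \<nu> \<mu> l" using that by blast
      from someI_ex[OF this] show ?thesis using that unfolding \<nu>s_def by simp
    qed
    from order_tendstoD(2)[OF P4[of \<nu>s, OF Ks] e] obtain N where N: "\<forall>l\<ge>N. Dd (\<nu>s l) \<mu> l < \<epsilon>"
      unfolding eventually_sequentially by blast
    from fr obtain l where "l \<ge> N" "\<exists>\<nu>\<in>K. \<epsilon> \<le> Dd \<nu> \<mu> l" by blast
    with N big show False by fastforce
  qed
  have part1: "\<forall>\<epsilon>>0. \<forall>\<^sub>F l in sequentially. \<forall>\<nu>\<in>K. \<forall>\<nu>'\<in>K. DE \<theta> (law \<nu> (R l)) (law \<nu>' (R l)) < \<epsilon>"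
  proof (intro allI impI)
    fix \<epsilon> :: real assume e: "0 < \<epsilon>"
    have e2: "0 < \<epsilon> / 2" using e by simp
    show "\<forall>\<^sub>F l in sequentially. \<forall>\<nu>\<in>K. \<forall>\<nu>'\<in>K. DE \<theta> (law \<nu> (R l)) (law \<nu>' (R l)) < \<epsilon>"
    proof (rule eventually_mono[OF P5[OF e2]])
      fix l assume h: "\<forall>\<nu>\<in>K. Dd \<nu> \<mu> l < \<epsilon> / 2"
      show "\<forall>\<nu>\<in>K. \<forall>\<nu>'\<in>K. DE \<theta> (law \<nu> (R l)) (law \<nu>' (R l)) < \<epsilon>"
      proof (intro ballI)
        fix \<nu> \<nu>' assume n: "\<nu> \<in> K" "\<nu>' \<in> K"
        have "Dd \<nu> \<nu>' l \<le> Dd \<nu> \<mu> l + Dd \<nu>' \<mu> l" by (rule P1[OF subsetD[OF KP n(1)] subsetD[OF KP n(2)]])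
        moreover have "Dd \<nu> \<mu> l < \<epsilon> / 2" "Dd \<nu>' \<mu> l < \<epsilon> / 2" using h n by blast+
        ultimately have "Dd \<nu> \<nu>' l < \<epsilon>" by linarith
        then show "DE \<theta> (law \<nu> (R l)) (law \<nu>' (R l)) < \<epsilon>" unfolding Dd_def .
      qed
    qed
  qed
  have part2: "\<forall>(P :: 'w measure) (Rr :: 'w \<Rightarrow> 'e) (\<nu>s :: nat \<Rightarrow> 'a measure) \<nu>bs.
          prob_space P \<longrightarrow> Rr \<in> borel_measurable P \<longrightarrow>
          (\<forall>l. \<nu>s l \<in> K) \<longrightarrow> (\<forall>l. \<nu>bs l \<in> K) \<longrightarrow>
          weak_conv_law (\<lambda>l. law (\<nu>bs l) (R l)) (law P Rr) \<longrightarrow>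
          weak_conv_law (\<lambda>l. law (\<nu>s l) (R l)) (law P Rr)"
  proof (intro allI impI)
    fix P :: "'w measure" and Rr :: "'w \<Rightarrow> 'e" and \<nu>s \<nu>bs :: "nat \<Rightarrow> 'a measure"
    assume PP: "prob_space P" and Rrm: "Rr \<in> borel_measurable P" and Ks: "\<forall>l. \<nu>s l \<in> K"
      and Kbs: "\<forall>l. \<nu>bs l \<in> K" and wc: "weak_conv_law (\<lambda>l. law (\<nu>bs l) (R l)) (law P Rr)"
    have fs: "prob_space (\<nu>s l)" "sets (\<nu>s l) = sets \<mu>" for l using ac_facts subsetD[OF KP] Ks by blast+
    have fbs: "prob_space (\<nu>bs l)" "sets (\<nu>bs l) = sets \<mu>" for l using ac_facts subsetD[OF KP] Kbs by blast+
    have d1: "(\<lambda>l. Dd (\<nu>s l) \<mu> l) \<longlonglongrightarrow> 0" by (rule P4) (use Ks in blast)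
    have d2: "(\<lambda>l. Dd (\<nu>bs l) \<mu> l) \<longlonglongrightarrow> 0" by (rule P4) (use Kbs in blast)
    have single: "\<bar>a \<nu> l j - a \<mu> l j\<bar> \<le> Dd \<nu> \<mu> l / wt j" if "prob_space \<nu>" "sets \<nu> = sets \<mu>" for \<nu> l j
    proof -
      have "wt j * \<bar>a \<nu> l j - a \<mu> l j\<bar> \<le> Dd \<nu> \<mu> l"
        unfolding Dd_eq by (rule wt_term) (simp, rule d_bd[OF that mu_facts])
      then show ?thesis using wt_pos[of j] by (simp add: field_simps)
    qed
    have coord: "(\<lambda>l. a (\<nu>s l) l j - a (\<nu>bs l) l j) \<longlonglongrightarrow> 0" for j
    proof (rule Lim_null_comparison)
      show "\<forall>\<^sub>F l in sequentially. norm (a (\<nu>s l) l j - a (\<nu>bs l) l j) \<le> (Dd (\<nu>s l) \<mu> l + Dd (\<nu>bs l) \<mu> l) / wt j"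
      proof (rule always_eventually, rule allI)
        fix l
        have "norm (a (\<nu>s l) l j - a (\<nu>bs l) l j) \<le> \<bar>a (\<nu>s l) l j - a \<mu> l j\<bar> + \<bar>a (\<nu>bs l) l j - a \<mu> l j\<bar>" by simp
        also have "\<dots> \<le> Dd (\<nu>s l) \<mu> l / wt j + Dd (\<nu>bs l) \<mu> l / wt j"
          by (intro add_mono single fs fbs)
        finally show "norm (a (\<nu>s l) l j - a (\<nu>bs l) l j) \<le> (Dd (\<nu>s l) \<mu> l + Dd (\<nu>bs l) \<mu> l) / wt j"
          by (simp add: add_divide_distrib)
      qed
      show "(\<lambda>l. (Dd (\<nu>s l) \<mu> l + Dd (\<nu>bs l) \<mu> l) / wt j) \<longlonglongrightarrow> 0"
        using tendsto_divide[OF tendsto_add[OF d1 d2] tendsto_const[of "wt j"]] wt_pos[of j] by simp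
    qed
    have Q: "prob_space (law P Rr)" "sets (law P Rr) = sets borel" by (rule law_prob[OF PP Rrm])+
    have Qs: "prob_space (law (\<nu>s l) (R l))" "sets (law (\<nu>s l) (R l)) = sets borel" for l
      by (rule law_prob[OF fs(1) Rnu[OF fs(2)]])+
    have Qbs: "prob_space (law (\<nu>bs l) (R l))" "sets (law (\<nu>bs l) (R l)) = sets borel" for l
      by (rule law_prob[OF fbs(1) Rnu[OF fbs(2)]])+
    show "weak_conv_law (\<lambda>l. law (\<nu>s l) (R l)) (law P Rr)"
      unfolding weak_conv_law_def
    proof (intro allI impI)
      fix f :: "'e \<Rightarrow> real" assume cf: "continuous_on UNIV f" and bf: "bounded (range f)"
      obtain B where B: "\<And>y. \<bar>f y\<bar> \<le> B" using bf unfolding bounded_iff by auto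
      have wcf: "(\<lambda>l. \<integral>y. f y \<partial>(law (\<nu>bs l) (R l))) \<longlonglongrightarrow> (\<integral>y. f y \<partial>(law P Rr))"
        using wc cf bf unfolding weak_conv_law_def by blast
      show "(\<lambda>l. \<integral>y. f y \<partial>(law (\<nu>s l) (R l))) \<longlonglongrightarrow> (\<integral>y. f y \<partial>(law P Rr))"
      proof (rule LIMSEQ_I)
        fix \<epsilon> :: real assume e: "0 < \<epsilon>"
        have e4: "0 < \<epsilon> / 4" using e by simp
        obtain j where j: "\<And>x. \<bar>f x - \<theta> j x\<bar> < \<epsilon> / 4"
          using adm cf e4 unfolding admissible_seq_def by blast
        define Sj where "Sj = (SUP y. \<bar>\<theta> j y\<bar>)"
        have \<theta>b: "\<bar>\<theta> j y\<bar> \<le> Sj" for y unfolding Sj_def by (rule cSUP_upper[OF _ theta_bounded[OF compE adm]]) simp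
        have \<theta>eq: "\<theta> j = (\<lambda>y. Sj * chi \<theta> j y)" unfolding Sj_def using chi_facts(2)[OF compE adm] by blast
        have ct: "continuous_on UNIV (\<theta> j)" by (rule chi_facts(5)[OF compE adm])
        have close: "\<bar>(\<integral>y. f y \<partial>Q') - (\<integral>y. \<theta> j y \<partial>Q')\<bar> \<le> \<epsilon> / 4"
          if "prob_space Q'" "sets Q' = sets borel" for Q'
          by (rule int_close[OF that cf ct B \<theta>b]) (use j in \<open>auto intro: less_imp_le\<close>)
        have th_a: "(\<integral>y. \<theta> j y \<partial>(law \<nu> (R l))) = Sj * a \<nu> l j" for \<nu> l
          unfolding a_def by (subst \<theta>eq) (rule integral_mult_right_zero)
        have "(\<lambda>l. Sj * (a (\<nu>s l) l j - a (\<nu>bs l) l j)) \<longlonglongrightarrow> Sj * 0"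
          by (rule tendsto_mult[OF tendsto_const coord])
        then obtain N1 where N1: "\<forall>l\<ge>N1. norm (Sj * (a (\<nu>s l) l j - a (\<nu>bs l) l j) - Sj * 0) < \<epsilon> / 4"
          using e4 unfolding LIMSEQ_iff by blast
        obtain N2 where N2: "\<forall>l\<ge>N2. norm ((\<integral>y. f y \<partial>(law (\<nu>bs l) (R l))) - (\<integral>y. f y \<partial>(law P Rr))) < \<epsilon> / 4"
          using wcf e4 unfolding LIMSEQ_iff by blast
        show "\<exists>no. \<forall>l\<ge>no. norm ((\<integral>y. f y \<partial>(law (\<nu>s l) (R l))) - (\<integral>y. f y \<partial>(law P Rr))) < \<epsilon>"
        proof (intro exI allI impI)
          fix l assume l: "l \<ge> max N1 N2"
          have c1: "\<bar>(\<integral>y. f y \<partial>(law (\<nu>s l) (R l))) - Sj * a (\<nu>s l) l j\<bar> \<le> \<epsilon> / 4"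
            using close[OF Qs] th_a by simp
          have c2: "\<bar>(\<integral>y. f y \<partial>(law (\<nu>bs l) (R l))) - Sj * a (\<nu>bs l) l j\<bar> \<le> \<epsilon> / 4"
            using close[OF Qbs] th_a by simp
          have c3: "\<bar>Sj * a (\<nu>s l) l j - Sj * a (\<nu>bs l) l j\<bar> < \<epsilon> / 4"
            using N1 l by (simp add: right_diff_distrib)
          have c4: "\<bar>(\<integral>y. f y \<partial>(law (\<nu>bs l) (R l))) - (\<integral>y. f y \<partial>(law P Rr))\<bar> < \<epsilon> / 4"
            using N2 l by simp
          show "norm ((\<integral>y. f y \<partial>(law (\<nu>s l) (R l))) - (\<integral>y. f y \<partial>(law P Rr))) < \<epsilon>"
            using four[OF c1 c2 c3 c4] by simp
        qed
      qed
    qed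
  qed
  show ?thesis using part1 part2 by blast
qed

end
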